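(* Let $A=\mathbb{C}Q/I$ be a toupie algebra and let $Q_a$ be the $a$-Kronecker quiver (two vertices, a source and a sink, and $a$ arrows from the source to the sink). The Lie subalgebra of $\mathrm{HH}^1(A)$ generated by $\{x_j, w_{pq}: p\ne q,\ 1\le p,q\le a,\ 2\le j\le a\}$ is isomorphic to $\mathrm{HH}^1(\mathbb{C}Q_a)$.
   Context: A finite quiver $Q$ is a toupie quiver if it has a unique source $0$, a unique sink $\omega$, and every other vertex is the source of exactly one arrow and the target of exactly one arrow. A branch is a path from $0$ to $\omega$. A toupie algebra is $A=\mathbb{C}Q/I$ with $Q$ toupie and $I$ an admissible ideal generated by monomial relations (paths inside one branch) and non-monomial relations (linear combinations of branches). $\alpha^{(1)},\dots,\alpha^{(a)}$ are the arrows from $0$ to $\omega$. $E=\mathbb{C}Q_0$. For an arrow $\gamma$ and $h\in e_{s(\gamma)}Ae_{t(\gamma)}$, $\gamma\|h$ is the derivation of $A$ vanishing on $E$ sending $\gamma$ to $h$ and other arrows to $0$; $\mathrm{HH}^1(A)$ (derivations vanishing on $E$ modulo inner ones) is a Lie algebra under the Gerstenhaber bracket. $w_{pq}$ is the class of $\alpha^{(p)}\|\alpha^{(q)}$ for $p\neq q$, and $x_j$ the class of $\alpha^{(j)}\|\alpha^{(j)}-\alpha^{(1)}\|\alpha^{(1)}$. *)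

theory Defs
  imports Complex_Main
begin

record ('v, 'e) quiver =
  verts :: "'v set"
  arrs  :: "'e set"
  src   :: "'e \<Rightarrow> 'v"
  tgt   :: "'e \<Rightarrow> 'v"

text \<open>A path is a pair (start vertex, list of arrows), composed left to right:
  the path a1 a2 ... an satisfies tgt ai = src a(i+1). The trivial path at v is (v, []).\<close>

type_synonym ('v, 'e) path = "'v \<times> 'e list"

definition qpath :: "('v, 'e) quiver \<Rightarrow> ('v, 'e) path \<Rightarrow> bool" where
  "qpath Q p \<longleftrightarrow> fst p \<in> verts Q \<and> set (snd p) \<subseteq> arrs Q
     \<and> (snd p \<noteq> [] \<longrightarrow> src Q (hd (snd p)) = fst p)
     \<and> (\<forall>i. Suc i < length (snd p) \<longrightarrow> tgt Q (snd p ! i) = src Q (snd p ! Suc i))"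

definition pend :: "('v, 'e) quiver \<Rightarrow> ('v, 'e) path \<Rightarrow> 'v" where
  "pend Q p = (if snd p = [] then fst p else tgt Q (last (snd p)))"

text \<open>Elements of the path algebra CQ: finitely supported complex functions on paths.\<close>

type_synonym ('v, 'e) pelem = "('v, 'e) path \<Rightarrow> complex"

definition cq :: "('v, 'e) quiver \<Rightarrow> ('v, 'e) pelem set" where
  "cq Q = {f. finite {p. f p \<noteq> 0} \<and> (\<forall>p. f p \<noteq> 0 \<longrightarrow> qpath Q p)}"

definition padd :: "('v, 'e) pelem \<Rightarrow> ('v, 'e) pelem \<Rightarrow> ('v, 'e) pelem" where
  "padd f g = (\<lambda>p. f p + g p)"

definition psub :: "('v, 'e) pelem \<Rightarrow> ('v, 'e) pelem \<Rightarrow> ('v, 'e) pelem" where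
  "psub f g = (\<lambda>p. f p - g p)"

definition psmult :: "complex \<Rightarrow> ('v, 'e) pelem \<Rightarrow> ('v, 'e) pelem" where
  "psmult c f = (\<lambda>p. c * f p)"

definition pzero :: "('v, 'e) pelem" where
  "pzero = (\<lambda>p. 0)"

definition pmult :: "('v, 'e) quiver \<Rightarrow> ('v, 'e) pelem \<Rightarrow> ('v, 'e) pelem \<Rightarrow> ('v, 'e) pelem" where
  "pmult Q f g = (\<lambda>p. if qpath Q p then
       (\<Sum>k\<in>{0..length (snd p)}. f (fst p, take k (snd p)) * g (pend Q (fst p, take k (snd p)), drop k (snd p)))
     else 0)"

definition pvec :: "('v, 'e) path \<Rightarrow> ('v, 'e) pelem" where
  "pvec q = (\<lambda>p. if p = q then 1 else 0)"

definition idem :: "'v \<Rightarrow> ('v, 'e) pelem" where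
  "idem v = pvec (v, [])"

definition arr :: "('v, 'e) quiver \<Rightarrow> 'e \<Rightarrow> ('v, 'e) pelem" where
  "arr Q g = pvec (src Q g, [g])"

definition Rk :: "('v, 'e) quiver \<Rightarrow> nat \<Rightarrow> ('v, 'e) pelem set" where
  "Rk Q k = {f \<in> cq Q. \<forall>p. f p \<noteq> 0 \<longrightarrow> k \<le> length (snd p)}"

inductive_set ideal_gen :: "('v, 'e) quiver \<Rightarrow> ('v, 'e) pelem set \<Rightarrow> ('v, 'e) pelem set"
  for Q R where
  zero: "pzero \<in> ideal_gen Q R"
| gen: "r \<in> R \<Longrightarrow> f \<in> cq Q \<Longrightarrow> g \<in> cq Q \<Longrightarrow> pmult Q f (pmult Q r g) \<in> ideal_gen Q R"
| add: "x \<in> ideal_gen Q R \<Longrightarrow> y \<in> ideal_gen Q R \<Longrightarrow> padd x y \<in> ideal_gen Q R"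
| smult: "x \<in> ideal_gen Q R \<Longrightarrow> psmult c x \<in> ideal_gen Q R"

definition admissible :: "('v, 'e) quiver \<Rightarrow> ('v, 'e) pelem set \<Rightarrow> bool" where
  "admissible Q I \<longleftrightarrow> (\<exists>m\<ge>2. Rk Q m \<subseteq> I) \<and> I \<subseteq> Rk Q 2"

definition is_toupie :: "('v, 'e) quiver \<Rightarrow> 'v \<Rightarrow> 'v \<Rightarrow> bool" where
  "is_toupie Q z0 om \<longleftrightarrow> finite (verts Q) \<and> finite (arrs Q)
     \<and> (\<forall>g\<in>arrs Q. src Q g \<in> verts Q \<and> tgt Q g \<in> verts Q)
     \<and> z0 \<in> verts Q \<and> om \<in> verts Q
     \<and> (\<forall>v\<in>verts Q. (\<not> (\<exists>g\<in>arrs Q. tgt Q g = v)) \<longleftrightarrow> v = z0)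
     \<and> (\<forall>v\<in>verts Q. (\<not> (\<exists>g\<in>arrs Q. src Q g = v)) \<longleftrightarrow> v = om)
     \<and> (\<forall>v\<in>verts Q - {z0, om}. card {g\<in>arrs Q. src Q g = v} = 1 \<and> card {g\<in>arrs Q. tgt Q g = v} = 1)"

definition is_branch :: "('v, 'e) quiver \<Rightarrow> 'v \<Rightarrow> 'v \<Rightarrow> ('v, 'e) path \<Rightarrow> bool" where
  "is_branch Q z0 om b \<longleftrightarrow> qpath Q b \<and> fst b = z0 \<and> pend Q b = om"

definition monomial_rel :: "('v, 'e) quiver \<Rightarrow> 'v \<Rightarrow> 'v \<Rightarrow> ('v, 'e) pelem \<Rightarrow> bool" where
  "monomial_rel Q z0 om r \<longleftrightarrow> (\<exists>p b xs ys. r = pvec p \<and> qpath Q p \<and> is_branch Q z0 om b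
      \<and> snd b = xs @ snd p @ ys)"

definition nonmonomial_rel :: "('v, 'e) quiver \<Rightarrow> 'v \<Rightarrow> 'v \<Rightarrow> ('v, 'e) pelem \<Rightarrow> bool" where
  "nonmonomial_rel Q z0 om r \<longleftrightarrow> r \<in> cq Q \<and> (\<forall>p. r p \<noteq> 0 \<longrightarrow> is_branch Q z0 om p)"

definition is_toupie_algebra :: "('v, 'e) quiver \<Rightarrow> 'v \<Rightarrow> 'v \<Rightarrow> ('v, 'e) pelem set \<Rightarrow> bool" where
  "is_toupie_algebra Q z0 om I \<longleftrightarrow> is_toupie Q z0 om
     \<and> (\<exists>R. (\<forall>r\<in>R. monomial_rel Q z0 om r \<or> nonmonomial_rel Q z0 om r)
            \<and> I = ideal_gen Q R) \<and> admissible Q I"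

text \<open>A derivation of A = CQ/I is represented by a map D on representatives in CQ which is
  well defined, C-linear and Leibniz modulo I; it vanishes on E if D(e_v) is in I.\<close>

type_synonym ('v, 'e) dmap = "('v, 'e) pelem \<Rightarrow> ('v, 'e) pelem"

definition is_der :: "('v, 'e) quiver \<Rightarrow> ('v, 'e) pelem set \<Rightarrow> ('v, 'e) dmap \<Rightarrow> bool" where
  "is_der Q I D \<longleftrightarrow>
     (\<forall>f\<in>cq Q. D f \<in> cq Q)
   \<and> (\<forall>f\<in>cq Q. \<forall>g\<in>cq Q. psub f g \<in> I \<longrightarrow> psub (D f) (D g) \<in> I)
   \<and> (\<forall>f\<in>cq Q. \<forall>g\<in>cq Q. \<forall>c. psub (D (padd (psmult c f) g)) (padd (psmult c (D f)) (D g)) \<in> I)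
   \<and> (\<forall>f\<in>cq Q. \<forall>g\<in>cq Q. psub (D (pmult Q f g)) (padd (pmult Q (D f) g) (pmult Q f (D g))) \<in> I)
   \<and> (\<forall>v\<in>verts Q. D (idem v) \<in> I)"

definition pcomm :: "('v, 'e) quiver \<Rightarrow> ('v, 'e) pelem \<Rightarrow> ('v, 'e) pelem \<Rightarrow> ('v, 'e) pelem" where
  "pcomm Q x f = psub (pmult Q x f) (pmult Q f x)"

definition is_inner :: "('v, 'e) quiver \<Rightarrow> ('v, 'e) pelem set \<Rightarrow> ('v, 'e) dmap \<Rightarrow> bool" where
  "is_inner Q I D \<longleftrightarrow> (\<exists>x\<in>cq Q. (\<forall>v\<in>verts Q. pcomm Q x (idem v) \<in> I)
       \<and> (\<forall>f\<in>cq Q. psub (D f) (pcomm Q x f) \<in> I))"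

definition dadd :: "('v, 'e) dmap \<Rightarrow> ('v, 'e) dmap \<Rightarrow> ('v, 'e) dmap" where
  "dadd D1 D2 = (\<lambda>f. padd (D1 f) (D2 f))"

definition dsub :: "('v, 'e) dmap \<Rightarrow> ('v, 'e) dmap \<Rightarrow> ('v, 'e) dmap" where
  "dsub D1 D2 = (\<lambda>f. psub (D1 f) (D2 f))"

definition dsmult :: "complex \<Rightarrow> ('v, 'e) dmap \<Rightarrow> ('v, 'e) dmap" where
  "dsmult c D = (\<lambda>f. psmult c (D f))"

text \<open>Gerstenhaber bracket on HH^1: the commutator of derivations.\<close>
definition dbr :: "('v, 'e) dmap \<Rightarrow> ('v, 'e) dmap \<Rightarrow> ('v, 'e) dmap" where
  "dbr D1 D2 = (\<lambda>f. psub (D1 (D2 f)) (D2 (D1 f)))"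

text \<open>Equality of classes in HH^1(A).\<close>
definition der_eq :: "('v, 'e) quiver \<Rightarrow> ('v, 'e) pelem set \<Rightarrow> ('v, 'e) dmap \<Rightarrow> ('v, 'e) dmap \<Rightarrow> bool" where
  "der_eq Q I D1 D2 \<longleftrightarrow> is_inner Q I (dsub D1 D2)"

text \<open>Representatives of the Lie subalgebra of HH^1(A) generated by (the classes of) G:
  all inner derivations, G, closed under linear combinations and brackets.\<close>
inductive_set lie_gen :: "('v, 'e) quiver \<Rightarrow> ('v, 'e) pelem set \<Rightarrow> ('v, 'e) dmap set \<Rightarrow> ('v, 'e) dmap set"
  for Q I G where
  gen: "D \<in> G \<Longrightarrow> D \<in> lie_gen Q I G"
| inner: "is_der Q I D \<Longrightarrow> is_inner Q I D \<Longrightarrow> D \<in> lie_gen Q I G"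
| add: "D1 \<in> lie_gen Q I G \<Longrightarrow> D2 \<in> lie_gen Q I G \<Longrightarrow> dadd D1 D2 \<in> lie_gen Q I G"
| smult: "D \<in> lie_gen Q I G \<Longrightarrow> dsmult c D \<in> lie_gen Q I G"
| br: "D1 \<in> lie_gen Q I G \<Longrightarrow> D2 \<in> lie_gen Q I G \<Longrightarrow> dbr D1 D2 \<in> lie_gen Q I G"

text \<open>Lie algebra isomorphism between (S modulo inner derivations of A1) and HH^1(A2),
  expressed on representatives.\<close>
definition lie_iso_HH1 :: "('v, 'e) quiver \<Rightarrow> ('v, 'e) pelem set \<Rightarrow> ('v, 'e) dmap set
     \<Rightarrow> ('w, 'f) quiver \<Rightarrow> ('w, 'f) pelem set \<Rightarrow> bool" where
  "lie_iso_HH1 Q1 I1 S Q2 I2 \<longleftrightarrow> (\<exists>\<phi>.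
      (\<forall>D\<in>S. is_der Q2 I2 (\<phi> D))
    \<and> (\<forall>D1\<in>S. \<forall>D2\<in>S. der_eq Q1 I1 D1 D2 \<longleftrightarrow> der_eq Q2 I2 (\<phi> D1) (\<phi> D2))
    \<and> (\<forall>E. is_der Q2 I2 E \<longrightarrow> (\<exists>D\<in>S. der_eq Q2 I2 (\<phi> D) E))
    \<and> (\<forall>D1\<in>S. \<forall>D2\<in>S. \<forall>c. der_eq Q2 I2 (\<phi> (dadd (dsmult c D1) D2)) (dadd (dsmult c (\<phi> D1)) (\<phi> D2)))
    \<and> (\<forall>D1\<in>S. \<forall>D2\<in>S. der_eq Q2 I2 (\<phi> (dbr D1 D2)) (dbr (\<phi> D1) (\<phi> D2))))"

text \<open>The derivation of CQ vanishing on E with prescribed values delta on the arrows: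
  a1...an maps to the sum over i of a1...a(i-1) delta(ai) a(i+1)...an.\<close>
definition free_der :: "('v, 'e) quiver \<Rightarrow> ('e \<Rightarrow> ('v, 'e) pelem) \<Rightarrow> ('v, 'e) dmap" where
  "free_der Q \<delta> f = (\<lambda>p. \<Sum>q\<in>{q. f q \<noteq> 0}. f q *
      (\<Sum>i<length (snd q). pmult Q (pmult Q (pvec (fst q, take i (snd q))) (\<delta> (snd q ! i)))
                              (pvec (tgt Q (snd q ! i), drop (Suc i) (snd q))) p))"

definition arrder :: "('v, 'e) quiver \<Rightarrow> 'e \<Rightarrow> ('v, 'e) pelem \<Rightarrow> ('v, 'e) dmap" where
  "arrder Q g h = free_der Q (\<lambda>b. if b = g then h else pzero)"

definition w_der :: "('v, 'e) quiver \<Rightarrow> (nat \<Rightarrow> 'e) \<Rightarrow> nat \<Rightarrow> nat \<Rightarrow> ('v, 'e) dmap" where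
  "w_der Q \<alpha> p q = arrder Q (\<alpha> p) (arr Q (\<alpha> q))"

definition x_der :: "('v, 'e) quiver \<Rightarrow> (nat \<Rightarrow> 'e) \<Rightarrow> nat \<Rightarrow> ('v, 'e) dmap" where
  "x_der Q \<alpha> j = dsub (arrder Q (\<alpha> j) (arr Q (\<alpha> j))) (arrder Q (\<alpha> 1) (arr Q (\<alpha> 1)))"

definition kronecker :: "nat \<Rightarrow> (nat, nat) quiver" where
  "kronecker a = \<lparr>verts = {0, 1}, arrs = {1..a}, src = (\<lambda>_. 0), tgt = (\<lambda>_. 1)\<rparr>"

end

theory Submission imports Defs begin
lemma pend_append: "pend Q (pend Q (v, ys), zs) = pend Q (v, ys @ zs)"
  by (cases "zs = []") (auto simp: pend_def)

lemma qpath_take: "qpath Q (v,xs) \<Longrightarrow> qpath Q (v, take k xs)"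
  unfolding qpath_def
  by (auto dest: in_set_takeD)
definition wfq :: "('v,'e) quiver \<Rightarrow> bool" where
  "wfq Q \<longleftrightarrow> (\<forall>g\<in>arrs Q. src Q g \<in> verts Q \<and> tgt Q g \<in> verts Q)"

lemma qpath_drop:
  assumes w: "wfq Q" and q: "qpath Q (v,xs)" and k: "k \<le> length xs"
  shows "qpath Q (pend Q (v, take k xs), drop k xs)"
proof -
  have qa: "set xs \<subseteq> arrs Q" using q by (simp add: qpath_def)
  have pe: "pend Q (v, take k xs) \<in> verts Q"
  proof (cases "take k xs = []")
    case True then show ?thesis using q by (simp add: pend_def qpath_def)
  next
    case False
    have "last (take k xs) \<in> set (take k xs)" using False by (rule last_in_set)
    then have "last (take k xs) \<in> set xs" by (meson in_set_takeD)
    then have "last (take k xs) \<in> arrs Q" using qa by blast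
    then show ?thesis using w False by (simp add: pend_def wfq_def)
  qed
  have hd: "src Q (hd (drop k xs)) = pend Q (v, take k xs)" if ne: "drop k xs \<noteq> []"
  proof -
    from ne have kl: "k < length xs" by simp
    show ?thesis
    proof (cases k)
      case 0 then show ?thesis using q ne by (simp add: pend_def qpath_def)
    next
      case (Suc j)
      have "last (take k xs) = xs ! j" using kl Suc
        by (simp add: take_Suc_conv_app_nth)
      moreover have "hd (drop k xs) = xs ! k" using kl by (simp add: hd_drop_conv_nth)
      moreover have "tgt Q (xs ! j) = src Q (xs ! Suc j)" using q kl Suc by (simp add: qpath_def)
      moreover have "take k xs \<noteq> []" using Suc kl by (cases xs) auto
      ultimately show ?thesis using Suc by (simp add: pend_def)
    qed
  qed
  have ch: "tgt Q (drop k xs ! i) = src Q (drop k xs ! Suc i)" if "Suc i < length (drop k xs)" for i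
  proof -
    have "Suc (k + i) < length xs" using that by simp
    then have "tgt Q (xs ! (k+i)) = src Q (xs ! Suc (k+i))" using q by (simp add: qpath_def)
    then show ?thesis using that k by (simp add: nth_drop)
  qed
  have "set (drop k xs) \<subseteq> arrs Q" using qa set_drop_subset by fastforce
  then show ?thesis using pe hd ch unfolding qpath_def by simp
qed

lemma qpath_append:
  assumes a: "qpath Q (v, ys)" and b: "qpath Q (pend Q (v, ys), zs)"
  shows "qpath Q (v, ys @ zs)"
proof -
  have c: "tgt Q ((ys @ zs) ! i) = src Q ((ys @ zs) ! Suc i)" if i: "Suc i < length (ys @ zs)" for i
  proof -
    consider "Suc i < length ys" | "Suc i = length ys" | "length ys \<le> i" by linarith
    then show ?thesis
    proof cases
      case 1 then show ?thesis using a by (simp add: qpath_def nth_append)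
    next
      case 2
      then have ne: "ys \<noteq> []" "zs \<noteq> []" using i by auto
      then have "pend Q (v, ys) = tgt Q (ys ! i)" using 2 by (simp add: pend_def last_conv_nth flip: 2)
      moreover have "src Q (hd zs) = pend Q (v, ys)" using b ne by (simp add: qpath_def)
      ultimately show ?thesis using 2 ne by (simp add: nth_append hd_conv_nth)
    next
      case 3
      then have "Suc (i - length ys) < length zs" using i by auto
      then have "tgt Q (zs ! (i - length ys)) = src Q (zs ! Suc (i - length ys))" using b by (simp add: qpath_def)
      then show ?thesis using 3 by (simp add: nth_append Suc_diff_le)
    qed
  qed
  have h: "src Q (hd (ys @ zs)) = v" if "ys @ zs \<noteq> []"
  proof (cases "ys = []")
    case True then show ?thesis using b that by (simp add: qpath_def pend_def)
  next
    case False then show ?thesis using a by (simp add: qpath_def)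
  qed
  have "set (ys @ zs) \<subseteq> arrs Q" using a b by (simp add: qpath_def)
  moreover have "v \<in> verts Q" using a by (simp add: qpath_def)
  ultimately show ?thesis using c h unfolding qpath_def by simp
qed

lemma tri_swap: "(\<Sum>j\<in>{0..n::nat}. \<Sum>i\<in>{0..j}. F i j) = (\<Sum>i\<in>{0..n}. \<Sum>j\<in>{i..n}. F i j)"
proof (induction n)
  case 0 then show ?case by simp
next
  case (Suc n)
  have "(\<Sum>i\<in>{0..Suc n}. \<Sum>j\<in>{i..Suc n}. F i j)
      = (\<Sum>i\<in>{0..n}. \<Sum>j\<in>{i..Suc n}. F i j) + F (Suc n) (Suc n)"
    by (simp add: sum.atLeast0_atMost_Suc)
  also have "(\<Sum>i\<in>{0..n}. \<Sum>j\<in>{i..Suc n}. F i j) = (\<Sum>i\<in>{0..n}. (\<Sum>j\<in>{i..n}. F i j) + F i (Suc n))"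
    by (rule sum.cong) (auto simp: sum.cl_ivl_Suc)
  finally show ?case using Suc by (simp add: sum.atLeast0_atMost_Suc sum.distrib)
qed

lemma pmult_at: "pmult Q f g (v,xs) = (if qpath Q (v,xs) then
   (\<Sum>k\<in>{0..length xs}. f (v, take k xs) * g (pend Q (v, take k xs), drop k xs)) else 0)"
  by (simp add: pmult_def)

lemma pmult_assoc:
  assumes w: "wfq Q"
  shows "pmult Q (pmult Q f g) h = pmult Q f (pmult Q g h)"
proof (rule ext)
  fix P :: "('a,'b) path"
  obtain v xs where P: "P = (v,xs)" by (cases P)
  show "pmult Q (pmult Q f g) h P = pmult Q f (pmult Q g h) P"
  proof (cases "qpath Q (v,xs)")
    case False then show ?thesis by (simp add: P pmult_def)
  next
    case q: True
    let ?n = "length xs"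
    define F where "F i j = f (v, take i xs) * g (pend Q (v, take i xs), take (j-i) (drop i xs)) * h (pend Q (v, take j xs), drop j xs)" for i j
    have L: "pmult Q (pmult Q f g) h P = (\<Sum>j\<in>{0..?n}. \<Sum>i\<in>{0..j}. F i j)"
    proof -
      have "pmult Q (pmult Q f g) h P = (\<Sum>j\<in>{0..?n}. pmult Q f g (v, take j xs) * h (pend Q (v, take j xs), drop j xs))"
        using q by (simp add: P pmult_at)
      also have "\<dots> = (\<Sum>j\<in>{0..?n}. \<Sum>i\<in>{0..j}. F i j)"
      proof (rule sum.cong[OF refl])
        fix j assume j: "j \<in> {0..?n}"
        have qj: "qpath Q (v, take j xs)" using q by (rule qpath_take)
        have "pmult Q f g (v, take j xs) = (\<Sum>i\<in>{0..j}. f (v, take i xs) * g (pend Q (v, take i xs), take (j-i) (drop i xs)))"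
        proof -
          have "pmult Q f g (v, take j xs) = (\<Sum>i\<in>{0..j}. f (v, take i (take j xs)) * g (pend Q (v, take i (take j xs)), drop i (take j xs)))"
            using j qj by (simp add: pmult_at min_def)
          also have "\<dots> = (\<Sum>i\<in>{0..j}. f (v, take i xs) * g (pend Q (v, take i xs), take (j-i) (drop i xs)))"
            by (rule sum.cong) (auto simp: drop_take min_def)
          finally show ?thesis .
        qed
        then show "pmult Q f g (v, take j xs) * h (pend Q (v, take j xs), drop j xs) = (\<Sum>i\<in>{0..j}. F i j)"
          by (simp add: F_def sum_distrib_right)
      qed
      finally show ?thesis .
    qed
    have R: "pmult Q f (pmult Q g h) P = (\<Sum>i\<in>{0..?n}. \<Sum>j\<in>{i..?n}. F i j)"
    proof -
      have "pmult Q f (pmult Q g h) P = (\<Sum>i\<in>{0..?n}. f (v, take i xs) * pmult Q g h (pend Q (v, take i xs), drop i xs))"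
        using q by (simp add: P pmult_at)
      also have "\<dots> = (\<Sum>i\<in>{0..?n}. \<Sum>j\<in>{i..?n}. F i j)"
      proof (rule sum.cong[OF refl])
        fix i assume i: "i \<in> {0..?n}"
        have qi: "qpath Q (pend Q (v, take i xs), drop i xs)" using qpath_drop[OF w q] i by simp
        have "pmult Q g h (pend Q (v, take i xs), drop i xs) = (\<Sum>l\<in>{0..?n - i}. g (pend Q (v, take i xs), take l (drop i xs)) * h (pend Q (v, take (i+l) xs), drop (i+l) xs))"
        proof -
          have e1: "pend Q (pend Q (v, take i xs), take l (drop i xs)) = pend Q (v, take (i+l) xs)" for l
            by (simp add: pend_append take_add)
          have e2: "drop l (drop i xs) = drop (i+l) xs" for l by (simp add: add.commute)
          show ?thesis using qi by (simp add: pmult_at e1 e2 del: drop_drop)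
        qed
        also have "\<dots> = (\<Sum>j\<in>{i..?n}. g (pend Q (v, take i xs), take (j-i) (drop i xs)) * h (pend Q (v, take j xs), drop j xs))"
        proof -
          let ?G = "\<lambda>j. g (pend Q (v, take i xs), take (j-i) (drop i xs)) * h (pend Q (v, take j xs), drop j xs)"
          have "sum ?G {0+i..(?n-i)+i} = (\<Sum>l\<in>{0..?n-i}. ?G (l+i))" by (rule sum.shift_bounds_cl_nat_ivl)
          moreover have "{0+i..(?n-i)+i} = {i..?n}" using i by auto
          ultimately show ?thesis by (simp add: add.commute)
        qed
        finally show "f (v, take i xs) * pmult Q g h (pend Q (v, take i xs), drop i xs) = (\<Sum>j\<in>{i..?n}. F i j)"
          by (simp add: F_def sum_distrib_left mult.assoc)
      qed
      finally show ?thesis .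
    qed
    show ?thesis using L R tri_swap by simp
  qed
qed

lemma pmult_padd_left: "pmult Q (padd f g) h = padd (pmult Q f h) (pmult Q g h)"
  by (rule ext) (simp add: pmult_def padd_def sum.distrib distrib_right)
lemma pmult_padd_right: "pmult Q h (padd f g) = padd (pmult Q h f) (pmult Q h g)"
  by (rule ext) (simp add: pmult_def padd_def sum.distrib distrib_left)
lemma pmult_psub_left: "pmult Q (psub f g) h = psub (pmult Q f h) (pmult Q g h)"
  by (rule ext) (simp add: pmult_def psub_def sum_subtractf left_diff_distrib)
lemma pmult_psub_right: "pmult Q h (psub f g) = psub (pmult Q h f) (pmult Q h g)"
  by (rule ext) (simp add: pmult_def psub_def sum_subtractf right_diff_distrib)
lemma pmult_psmult_left: "pmult Q (psmult c f) h = psmult c (pmult Q f h)"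
  by (rule ext) (simp add: pmult_def psmult_def sum_distrib_left mult.assoc)
lemma pmult_psmult_right: "pmult Q h (psmult c f) = psmult c (pmult Q h f)"
  by (rule ext) (simp add: pmult_def psmult_def sum_distrib_left mult.left_commute)
lemma pmult_pzero_left: "pmult Q pzero h = pzero"
  by (rule ext) (simp add: pmult_def pzero_def)
lemma pmult_pzero_right: "pmult Q h pzero = pzero"
  by (rule ext) (simp add: pmult_def pzero_def)

lemma pmult_idem_left: "pmult Q (idem v) f P = (if qpath Q P \<and> fst P = v then f P else 0)"
proof -
  obtain w xs where P: "P = (w,xs)" by (cases P)
  have "(\<Sum>k\<in>{0..length xs}. idem v (w, take k xs) * f (pend Q (w, take k xs), drop k xs))
      = (\<Sum>k\<in>{0}. idem v (w, take k xs) * f (pend Q (w, take k xs), drop k xs))"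
    by (rule sum.mono_neutral_right) (auto simp: idem_def pvec_def take_eq_Nil)
  then show ?thesis by (auto simp: P pmult_at idem_def pvec_def pend_def)
qed

lemma pmult_idem_right: "pmult Q f (idem v) P = (if qpath Q P \<and> pend Q P = v then f P else 0)"
proof -
  obtain w xs where P: "P = (w,xs)" by (cases P)
  have "(\<Sum>k\<in>{0..length xs}. f (w, take k xs) * idem v (pend Q (w, take k xs), drop k xs))
      = (\<Sum>k\<in>{length xs}. f (w, take k xs) * idem v (pend Q (w, take k xs), drop k xs))"
    by (rule sum.mono_neutral_right) (auto simp: idem_def pvec_def)
  then show ?thesis by (auto simp: P pmult_at idem_def pvec_def)
qed

definition supp :: "('v,'e) pelem \<Rightarrow> ('v,'e) path set" where
  "supp f = {p. f p \<noteq> 0}"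

lemma supp_pmult: "supp (pmult Q f g) \<subseteq> (\<lambda>(p,q). (fst p, snd p @ snd q)) ` (supp f \<times> supp g)"
proof
  fix P assume "P \<in> supp (pmult Q f g)"
  then have nz: "pmult Q f g P \<noteq> 0" by (simp add: supp_def)
  obtain v xs where P: "P = (v,xs)" by (cases P)
  from nz have "(\<Sum>k\<in>{0..length xs}. f (v, take k xs) * g (pend Q (v, take k xs), drop k xs)) \<noteq> 0"
    by (simp add: P pmult_at split: if_splits)
  then obtain k where "f (v, take k xs) * g (pend Q (v, take k xs), drop k xs) \<noteq> 0"
    by (rule sum.not_neutral_contains_not_neutral)
  then have "f (v, take k xs) \<noteq> 0" "g (pend Q (v, take k xs), drop k xs) \<noteq> 0" by auto
  then have "((v, take k xs), (pend Q (v, take k xs), drop k xs)) \<in> supp f \<times> supp g" by (simp add: supp_def)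
  moreover have "P = (\<lambda>(p,q). (fst p, snd p @ snd q)) ((v, take k xs), (pend Q (v, take k xs), drop k xs))" by (simp add: P)
  ultimately show "P \<in> (\<lambda>(p,q). (fst p, snd p @ snd q)) ` (supp f \<times> supp g)" by blast
qed

lemma cq_pmult: "f \<in> cq Q \<Longrightarrow> g \<in> cq Q \<Longrightarrow> pmult Q f g \<in> cq Q"
proof -
  assume f: "f \<in> cq Q" and g: "g \<in> cq Q"
  have "finite (supp f)" "finite (supp g)" using f g by (auto simp: cq_def supp_def)
  then have "finite ((\<lambda>(p,q). (fst p, snd p @ snd q)) ` (supp f \<times> supp g))" by simp
  then have "finite (supp (pmult Q f g))" using supp_pmult by (rule finite_subset[rotated])
  then show ?thesis by (auto simp: cq_def supp_def pmult_def)
qed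

lemma cq_padd: "f \<in> cq Q \<Longrightarrow> g \<in> cq Q \<Longrightarrow> padd f g \<in> cq Q"
proof -
  assume f: "f \<in> cq Q" and g: "g \<in> cq Q"
  have "{p. padd f g p \<noteq> 0} \<subseteq> {p. f p \<noteq> 0} \<union> {p. g p \<noteq> 0}" by (auto simp: padd_def)
  moreover have "finite ({p. f p \<noteq> 0} \<union> {p. g p \<noteq> 0})" using f g by (simp add: cq_def)
  ultimately have "finite {p. padd f g p \<noteq> 0}" by (rule finite_subset)
  moreover have "\<forall>p. padd f g p \<noteq> 0 \<longrightarrow> qpath Q p"
  proof (intro allI impI)
    fix p assume "padd f g p \<noteq> 0"
    then have "f p \<noteq> 0 \<or> g p \<noteq> 0" by (auto simp: padd_def)
    then show "qpath Q p" using f g unfolding cq_def by blast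
  qed
  ultimately show ?thesis by (simp add: cq_def)
qed

lemma cq_psmult: "f \<in> cq Q \<Longrightarrow> psmult c f \<in> cq Q"
proof -
  assume f: "f \<in> cq Q"
  have "{p. psmult c f p \<noteq> 0} \<subseteq> {p. f p \<noteq> 0}" by (auto simp: psmult_def)
  moreover have "finite {p. f p \<noteq> 0}" using f by (simp add: cq_def)
  ultimately have "finite {p. psmult c f p \<noteq> 0}" by (rule finite_subset)
  then show ?thesis using f unfolding cq_def psmult_def by auto
qed

lemma cq_psub: "f \<in> cq Q \<Longrightarrow> g \<in> cq Q \<Longrightarrow> psub f g \<in> cq Q"
proof -
  assume f: "f \<in> cq Q" and g: "g \<in> cq Q"
  have "{p. psub f g p \<noteq> 0} \<subseteq> {p. f p \<noteq> 0} \<union> {p. g p \<noteq> 0}" by (auto simp: psub_def)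
  moreover have "finite ({p. f p \<noteq> 0} \<union> {p. g p \<noteq> 0})" using f g by (simp add: cq_def)
  ultimately have "finite {p. psub f g p \<noteq> 0}" by (rule finite_subset)
  moreover have "\<forall>p. psub f g p \<noteq> 0 \<longrightarrow> qpath Q p"
  proof (intro allI impI)
    fix p assume "psub f g p \<noteq> 0"
    then have "f p \<noteq> 0 \<or> g p \<noteq> 0" by (auto simp: psub_def)
    then show "qpath Q p" using f g unfolding cq_def by blast
  qed
  ultimately show ?thesis by (simp add: cq_def)
qed

lemma cq_pzero: "pzero \<in> cq Q" by (simp add: cq_def pzero_def)

lemma cq_pvec: "qpath Q p \<Longrightarrow> pvec p \<in> cq Q" by (simp add: cq_def pvec_def)

lemma cq_idem: "v \<in> verts Q \<Longrightarrow> idem v \<in> cq Q"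
  by (simp add: idem_def cq_pvec qpath_def)

lemma cq_pcomm: "x \<in> cq Q \<Longrightarrow> f \<in> cq Q \<Longrightarrow> pcomm Q x f \<in> cq Q"
  by (simp add: pcomm_def cq_psub cq_pmult)

definition Lm :: "'v \<Rightarrow> nat \<Rightarrow> (nat \<Rightarrow> 'e) \<Rightarrow> (nat \<Rightarrow> nat \<Rightarrow> complex) \<Rightarrow> ('v,'e) dmap" where
  "Lm z0 a \<alpha> T f = (\<lambda>P. \<Sum>r\<in>{1..a}. if P = (z0, [\<alpha> r]) then (\<Sum>p\<in>{1..a}. T p r * f (z0, [\<alpha> p])) else 0)"

definition mm :: "nat \<Rightarrow> (nat \<Rightarrow> nat \<Rightarrow> complex) \<Rightarrow> (nat \<Rightarrow> nat \<Rightarrow> complex) \<Rightarrow> (nat \<Rightarrow> nat \<Rightarrow> complex)" where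
  "mm a A B = (\<lambda>p q. \<Sum>r\<in>{1..a}. A p r * B r q)"

definition trc :: "nat \<Rightarrow> (nat \<Rightarrow> nat \<Rightarrow> complex) \<Rightarrow> complex" where
  "trc a T = (\<Sum>p\<in>{1..a}. T p p)"

locale ab =
  fixes Q :: "('v,'e) quiver" and z0 om :: 'v and I :: "('v,'e) pelem set" and a :: nat and \<alpha> :: "nat \<Rightarrow> 'e"
  assumes wf: "wfq Q"
    and al: "\<And>p. p \<in> {1..a} \<Longrightarrow> \<alpha> p \<in> arrs Q \<and> src Q (\<alpha> p) = z0 \<and> tgt Q (\<alpha> p) = om"
    and inj: "inj_on \<alpha> {1..a}"
    and noin: "\<And>g. g \<in> arrs Q \<Longrightarrow> tgt Q g \<noteq> z0"
    and noout: "\<And>g. g \<in> arrs Q \<Longrightarrow> src Q g \<noteq> om"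
    and z0v: "z0 \<in> verts Q"
    and I0: "pzero \<in> I"
    and Iadd: "\<And>x y. x \<in> I \<Longrightarrow> y \<in> I \<Longrightarrow> padd x y \<in> I"
    and Ismult: "\<And>x c. x \<in> I \<Longrightarrow> psmult c x \<in> I"
    and Ilow: "\<And>x P. x \<in> I \<Longrightarrow> length (snd P) \<le> 1 \<Longrightarrow> x P = 0"
    and Imul: "\<And>x h. x \<in> I \<Longrightarrow> h \<in> cq Q \<Longrightarrow> pmult Q h x \<in> I \<and> pmult Q x h \<in> I"
begin

abbreviation L where "L \<equiv> Lm z0 a \<alpha>"
abbreviation ap where "ap r \<equiv> (z0, [\<alpha> r])"

lemma Isub: "x \<in> I \<Longrightarrow> y \<in> I \<Longrightarrow> psub x y \<in> I"
proof -
  assume x: "x \<in> I" and y: "y \<in> I"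
  have "psub x y = padd x (psmult (-1) y)" by (rule ext) (simp add: psub_def padd_def psmult_def)
  then show ?thesis using x y Iadd Ismult by simp
qed

lemma Ialpha: "x \<in> I \<Longrightarrow> x (ap r) = 0" by (rule Ilow) auto

lemma omv: "p \<in> {1..a} \<Longrightarrow> om \<in> verts Q" using al wf by (fastforce simp: wfq_def)

lemma z0om: "p \<in> {1..a} \<Longrightarrow> z0 \<noteq> om" using al noin by metis

lemma qpath_ap: "r \<in> {1..a} \<Longrightarrow> qpath Q (ap r)"
  using al z0v by (simp add: qpath_def)

lemma alpha_path:
  assumes q: "qpath Q (v, xs)" and r: "r \<in> {1..a}" and m: "\<alpha> r \<in> set xs"
  shows "(v, xs) = ap r"
proof -
  obtain i where i: "i < length xs" "xs ! i = \<alpha> r" using m by (metis in_set_conv_nth)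
  have ar: "set xs \<subseteq> arrs Q" using q by (simp add: qpath_def)
  have i0: "i = 0"
  proof (rule ccontr)
    assume "i \<noteq> 0"
    then obtain j where j: "i = Suc j" by (cases i) auto
    have "tgt Q (xs ! j) = src Q (xs ! Suc j)" using q i j by (simp add: qpath_def)
    then have "tgt Q (xs ! j) = z0" using al[OF r] i j by simp
    moreover have "xs ! j \<in> arrs Q" using ar i j by (simp add: subset_iff)
    ultimately show False using noin by blast
  qed
  have l1: "length xs = 1"
  proof (rule ccontr)
    assume "length xs \<noteq> 1"
    then have "Suc 0 < length xs" using i by simp
    then have "tgt Q (xs ! 0) = src Q (xs ! Suc 0)" using q by (simp add: qpath_def)
    then have "src Q (xs ! 1) = om" using al[OF r] i i0 by simp
    moreover have "xs ! 1 \<in> arrs Q" using ar \<open>Suc 0 < length xs\<close> by (simp add: subset_iff)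
    ultimately show False using noout by blast
  qed
  then have xs: "xs = [\<alpha> r]" using i i0 by (cases xs) auto
  have "v = z0" using q al[OF r] by (simp add: qpath_def xs)
  then show ?thesis using xs by simp
qed

lemma ap_eq: "r \<in> {1..a} \<Longrightarrow> s \<in> {1..a} \<Longrightarrow> (ap r = ap s) = (r = s)"
  using inj_on_eq_iff[OF inj] by simp

lemma pmult_ap: "r \<in> {1..a} \<Longrightarrow> pmult Q f g (ap r) = f (z0, []) * g (ap r) + f (ap r) * g (om, [])"
  using qpath_ap[of r] al[of r] by (simp add: pmult_at pend_def)

definition asupp :: "('v,'e) pelem \<Rightarrow> bool" where
  "asupp h \<longleftrightarrow> (\<forall>P. h P \<noteq> 0 \<longrightarrow> (\<exists>r\<in>{1..a}. P = ap r))"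

lemma asupp_L: "asupp (L T f)"
  unfolding asupp_def
proof (intro allI impI)
  fix P assume "L T f P \<noteq> 0"
  then obtain r where "r \<in> {1..a}" "(if P = ap r then (\<Sum>p\<in>{1..a}. T p r * f (ap p)) else 0) \<noteq> 0"
    unfolding Lm_def by (rule sum.not_neutral_contains_not_neutral)
  then show "\<exists>r\<in>{1..a}. P = ap r" by (auto split: if_splits)
qed

lemma L_at: "r \<in> {1..a} \<Longrightarrow> L T f (ap r) = (\<Sum>p\<in>{1..a}. T p r * f (ap p))"
proof -
  assume r: "r \<in> {1..a}"
  have "L T f (ap r) = (\<Sum>r'\<in>{1..a}. if r' = r then (\<Sum>p\<in>{1..a}. T p r' * f (ap p)) else 0)"
    unfolding Lm_def by (rule sum.cong) (use r ap_eq in auto)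
  also have "\<dots> = (\<Sum>p\<in>{1..a}. T p r * f (ap p))" using r by simp
  finally show ?thesis .
qed

lemma asupp_eq:
  assumes "asupp F" "asupp G" "\<And>r. r \<in> {1..a} \<Longrightarrow> F (ap r) = G (ap r)"
  shows "F = G"
proof (rule ext)
  fix P show "F P = G P"
  proof (cases "\<exists>r\<in>{1..a}. P = ap r")
    case True then show ?thesis using assms(3) by auto
  next
    case False then show ?thesis using assms(1,2) unfolding asupp_def by metis
  qed
qed

lemma asupp_padd: "asupp F \<Longrightarrow> asupp G \<Longrightarrow> asupp (padd F G)"
  unfolding asupp_def
proof (intro allI impI)
  fix P assume F: "\<forall>P. F P \<noteq> 0 \<longrightarrow> (\<exists>r\<in>{1..a}. P = ap r)" and G: "\<forall>P. G P \<noteq> 0 \<longrightarrow> (\<exists>r\<in>{1..a}. P = ap r)"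
    and "padd F G P \<noteq> 0"
  then have "F P \<noteq> 0 \<or> G P \<noteq> 0" by (auto simp: padd_def)
  then show "\<exists>r\<in>{1..a}. P = ap r" using F G by blast
qed
lemma asupp_psub: "asupp F \<Longrightarrow> asupp G \<Longrightarrow> asupp (psub F G)"
  unfolding asupp_def
proof (intro allI impI)
  fix P assume F: "\<forall>P. F P \<noteq> 0 \<longrightarrow> (\<exists>r\<in>{1..a}. P = ap r)" and G: "\<forall>P. G P \<noteq> 0 \<longrightarrow> (\<exists>r\<in>{1..a}. P = ap r)"
    and "psub F G P \<noteq> 0"
  then have "F P \<noteq> 0 \<or> G P \<noteq> 0" by (auto simp: psub_def)
  then show "\<exists>r\<in>{1..a}. P = ap r" using F G by blast
qed
lemma asupp_psmult: "asupp F \<Longrightarrow> asupp (psmult c F)"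
  unfolding asupp_def psmult_def by (metis mult_zero_right)
lemma asupp_pzero: "asupp pzero"
  unfolding asupp_def pzero_def by simp

lemma asupp_nontriv: "asupp h \<Longrightarrow> h (v, []) = 0"
  unfolding asupp_def by auto

lemma asupp_pmult_left:
  assumes h: "asupp h"
  shows "pmult Q x h = psmult (x (z0, [])) h"
proof (rule ext)
  fix P :: "('v,'e) path"
  show "pmult Q x h P = psmult (x (z0, [])) h P"
  proof (cases "\<exists>r\<in>{1..a}. P = ap r")
    case True
    then obtain r where r: "r \<in> {1..a}" "P = ap r" by blast
    then show ?thesis using pmult_ap[OF r(1)] asupp_nontriv[OF h] by (simp add: psmult_def)
  next
    case False
    then have hP: "h P = 0" using h unfolding asupp_def by metis
    obtain v xs where P: "P = (v, xs)" by (cases P)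
    have "pmult Q x h P = 0"
    proof (cases "qpath Q (v, xs)")
      case False then show ?thesis by (simp add: P pmult_at)
    next
      case q: True
      have "x (v, take k xs) * h (pend Q (v, take k xs), drop k xs) = 0" for k
      proof (rule ccontr)
        assume "x (v, take k xs) * h (pend Q (v, take k xs), drop k xs) \<noteq> 0"
        then have "h (pend Q (v, take k xs), drop k xs) \<noteq> 0" by auto
        then obtain r where r: "r \<in> {1..a}" "(pend Q (v, take k xs), drop k xs) = ap r"
          using h unfolding asupp_def by blast
        then have "\<alpha> r \<in> set xs" by (metis in_set_dropD list.set_intros(1) prod.inject)
        then have "P = ap r" using alpha_path[OF q r(1)] P by simp
        then show False using False r(1) by blast
      qed
      then have z: "(\<Sum>k\<in>{0..length xs}. x (v, take k xs) * h (pend Q (v, take k xs), drop k xs)) = 0"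
        by (intro sum.neutral) blast
      show ?thesis using z q by (simp add: P pmult_at)
    qed
    then show ?thesis using hP by (simp add: psmult_def)
  qed
qed

lemma asupp_pmult_right:
  assumes h: "asupp h"
  shows "pmult Q h x = psmult (x (om, [])) h"
proof (rule ext)
  fix P :: "('v,'e) path"
  show "pmult Q h x P = psmult (x (om, [])) h P"
  proof (cases "\<exists>r\<in>{1..a}. P = ap r")
    case True
    then obtain r where r: "r \<in> {1..a}" "P = ap r" by blast
    then show ?thesis using pmult_ap[OF r(1)] asupp_nontriv[OF h] by (simp add: psmult_def)
  next
    case False
    then have hP: "h P = 0" using h unfolding asupp_def by metis
    obtain v xs where P: "P = (v, xs)" by (cases P)
    have "pmult Q h x P = 0"
    proof (cases "qpath Q (v, xs)")
      case False then show ?thesis by (simp add: P pmult_at)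
    next
      case q: True
      have "h (v, take k xs) * x (pend Q (v, take k xs), drop k xs) = 0" for k
      proof (rule ccontr)
        assume "h (v, take k xs) * x (pend Q (v, take k xs), drop k xs) \<noteq> 0"
        then have "h (v, take k xs) \<noteq> 0" by auto
        then obtain r where r: "r \<in> {1..a}" "(v, take k xs) = ap r"
          using h unfolding asupp_def by blast
        then have "\<alpha> r \<in> set xs" by (metis in_set_takeD list.set_intros(1) prod.inject)
        then have "P = ap r" using alpha_path[OF q r(1)] P by simp
        then show False using False r(1) by blast
      qed
      then have z: "(\<Sum>k\<in>{0..length xs}. h (v, take k xs) * x (pend Q (v, take k xs), drop k xs)) = 0"
        by (intro sum.neutral) blast
      show ?thesis using z q by (simp add: P pmult_at)
    qed
    then show ?thesis using hP by (simp add: psmult_def)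
  qed
qed


lemma L_cq: "L T f \<in> cq Q"
proof -
  have "{P. L T f P \<noteq> 0} \<subseteq> ap ` {1..a}" using asupp_L[of T f] unfolding asupp_def by blast
  then have "finite {P. L T f P \<noteq> 0}" by (rule finite_subset) simp
  moreover have "\<forall>P. L T f P \<noteq> 0 \<longrightarrow> qpath Q P" using asupp_L[of T f] qpath_ap unfolding asupp_def by blast
  ultimately show ?thesis by (simp add: cq_def)
qed

lemma L_lin: "L T (padd (psmult c f) g) = padd (psmult c (L T f)) (L T g)"
  by (rule asupp_eq; (intro asupp_L asupp_padd asupp_psmult asupp_psub asupp_pzero)?; auto simp: L_at padd_def psmult_def
      sum.distrib sum_distrib_left algebra_simps)
lemma L_padd: "L T (padd f g) = padd (L T f) (L T g)"
  by (rule asupp_eq; (intro asupp_L asupp_padd asupp_psmult asupp_psub asupp_pzero)?; auto simp: L_at padd_def sum.distrib algebra_simps)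
lemma L_psub: "L T (psub f g) = psub (L T f) (L T g)"
  by (rule asupp_eq; (intro asupp_L asupp_padd asupp_psmult asupp_psub asupp_pzero)?; auto simp: L_at psub_def sum_subtractf algebra_simps)
lemma L_psmult: "L T (psmult c f) = psmult c (L T f)"
  by (rule asupp_eq; (intro asupp_L asupp_padd asupp_psmult asupp_psub asupp_pzero)?; auto simp: L_at psmult_def sum_distrib_left algebra_simps)
lemma L_pzero: "L T pzero = pzero"
  by (rule asupp_eq; (intro asupp_L asupp_padd asupp_psmult asupp_psub asupp_pzero)?; auto simp: L_at pzero_def)
lemma L_I: "x \<in> I \<Longrightarrow> L T x = pzero"
  by (rule asupp_eq; (intro asupp_L asupp_padd asupp_psmult asupp_psub asupp_pzero)?; auto simp: L_at pzero_def Ialpha)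
lemma L_idem: "L T (idem v) = pzero"
  by (rule asupp_eq; (intro asupp_L asupp_padd asupp_psmult asupp_psub asupp_pzero)?; auto simp: L_at pzero_def idem_def pvec_def)

lemma L_pmult: "L T (pmult Q f g) = padd (pmult Q (L T f) g) (pmult Q f (L T g))"
  unfolding asupp_pmult_left[OF asupp_L] asupp_pmult_right[OF asupp_L]
  by (rule asupp_eq; (intro asupp_L asupp_padd asupp_psmult asupp_psub asupp_pzero)?; auto simp: L_at padd_def psmult_def pmult_ap
      sum.distrib sum_distrib_left algebra_simps)

lemma psub_self: "psub x x = pzero" by (rule ext) (simp add: psub_def pzero_def)

lemma is_der_L: "is_der Q I (L T)"
  unfolding is_der_def
proof (intro conjI ballI allI impI)
  fix f show "L T f \<in> cq Q" by (rule L_cq)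
next
  fix f g assume "psub f g \<in> I"
  then have "L T (psub f g) = pzero" by (rule L_I)
  then have "psub (L T f) (L T g) = pzero" by (simp add: L_psub)
  then show "psub (L T f) (L T g) \<in> I" using I0 by simp
next
  fix f g c show "psub (L T (padd (psmult c f) g)) (padd (psmult c (L T f)) (L T g)) \<in> I"
    by (simp add: L_lin psub_self I0)
next
  fix f g show "psub (L T (pmult Q f g)) (padd (pmult Q (L T f) g) (pmult Q f (L T g))) \<in> I"
    by (simp add: L_pmult psub_self I0)
next
  fix v show "L T (idem v) \<in> I" by (simp add: L_idem I0)
qed

lemma L_comp: "L T1 (L T2 f) = L (mm a T2 T1) f"
proof (rule asupp_eq[OF asupp_L asupp_L])
  fix r assume r: "r \<in> {1..a}"
  have "L T1 (L T2 f) (ap r) = (\<Sum>p\<in>{1..a}. T1 p r * (\<Sum>s\<in>{1..a}. T2 s p * f (ap s)))"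
    using r by (simp add: L_at)
  also have "\<dots> = (\<Sum>p\<in>{1..a}. \<Sum>s\<in>{1..a}. T2 s p * T1 p r * f (ap s))"
    by (simp add: sum_distrib_left algebra_simps)
  also have "\<dots> = (\<Sum>s\<in>{1..a}. \<Sum>p\<in>{1..a}. T2 s p * T1 p r * f (ap s))"
    by (rule sum.swap)
  also have "\<dots> = (\<Sum>s\<in>{1..a}. mm a T2 T1 s r * f (ap s))"
    by (simp add: mm_def sum_distrib_right)
  also have "\<dots> = L (mm a T2 T1) f (ap r)" using r by (simp add: L_at)
  finally show "L T1 (L T2 f) (ap r) = L (mm a T2 T1) f (ap r)" .
qed

lemma L_Tlin: "L (\<lambda>p q. c * T1 p q + T2 p q) f = padd (psmult c (L T1 f)) (L T2 f)"
  by (rule asupp_eq; (intro asupp_L asupp_padd asupp_psmult asupp_psub asupp_pzero)?; auto simp: L_at padd_def psmult_def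
      sum.distrib sum_distrib_left algebra_simps)
lemma L_Tdiff: "L (\<lambda>p q. T1 p q - T2 p q) f = psub (L T1 f) (L T2 f)"
  by (rule asupp_eq; (intro asupp_L asupp_padd asupp_psmult asupp_psub asupp_pzero)?; auto simp: L_at psub_def sum_subtractf algebra_simps)
lemma L_T0: "L (\<lambda>p q. 0) f = pzero"
  by (rule asupp_eq; (intro asupp_L asupp_padd asupp_psmult asupp_psub asupp_pzero)?; auto simp: L_at pzero_def)
lemma L_Tcong: "(\<And>p q. p \<in> {1..a} \<Longrightarrow> q \<in> {1..a} \<Longrightarrow> T1 p q = T2 p q) \<Longrightarrow> L T1 f = L T2 f"
  by (rule asupp_eq; (intro asupp_L asupp_padd asupp_psmult asupp_psub asupp_pzero)?; auto simp: L_at)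

lemma pcomm_ap: "r \<in> {1..a} \<Longrightarrow> pcomm Q x f (ap r) =
   x (z0, []) * f (ap r) + x (ap r) * f (om, []) - f (z0, []) * x (ap r) - f (ap r) * x (om, [])"
  by (simp add: pcomm_def psub_def pmult_ap)

lemma L_pcomm: assumes "\<And>r. r \<in> {1..a} \<Longrightarrow> x (ap r) = 0"
  shows "L T (pcomm Q x f) = psmult (x (z0, []) - x (om, [])) (L T f)"
  by (rule asupp_eq; (intro asupp_L asupp_padd asupp_psmult asupp_psub asupp_pzero)?; auto simp: L_at psmult_def pcomm_ap assms
      sum_distrib_left sum_subtractf sum.distrib algebra_simps)

lemma pcomm_L: "pcomm Q x (L T f) = psmult (x (z0, []) - x (om, [])) (L T f)"
  unfolding pcomm_def asupp_pmult_left[OF asupp_L] asupp_pmult_right[OF asupp_L]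
  by (rule ext) (simp add: psub_def psmult_def algebra_simps)

lemma Dg_alpha:
  assumes d: "\<forall>v\<in>verts Q. pcomm Q x (idem v) \<in> I" and r: "r \<in> {1..a}"
  shows "x (ap r) = 0"
proof -
  have "pcomm Q x (idem om) \<in> I" using d omv[OF r] by blast
  then have "pcomm Q x (idem om) (ap r) = 0" by (rule Ialpha)
  moreover have "pcomm Q x (idem om) (ap r) = x (ap r)"
    using z0om[OF r] r by (simp add: pcomm_ap idem_def pvec_def)
  ultimately show ?thesis by simp
qed

lemma arr_alpha: "p \<in> {1..a} \<Longrightarrow> arr Q (\<alpha> p) = pvec (ap p)"
  using al by (simp add: arr_def)

lemma arr_ap: "p \<in> {1..a} \<Longrightarrow> q \<in> {1..a} \<Longrightarrow> arr Q (\<alpha> p) (ap q) = (if p = q then 1 else 0)"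
  using inj_on_eq_iff[OF inj, of q p] by (auto simp: arr_alpha pvec_def)

lemma L_arr: "p \<in> {1..a} \<Longrightarrow> q \<in> {1..a} \<Longrightarrow> L T (arr Q (\<alpha> p)) (ap q) = T p q"
proof -
  assume p: "p \<in> {1..a}" and q: "q \<in> {1..a}"
  have "L T (arr Q (\<alpha> p)) (ap q) = (\<Sum>p'\<in>{1..a}. T p' q * (if p' = p then 1 else 0))"
    using p q by (simp add: L_at arr_ap eq_commute[of p])
  also have "\<dots> = T p q" using p by (simp add: if_distrib cong: if_cong)
  finally show ?thesis .
qed

lemma pcomm_arr: "p \<in> {1..a} \<Longrightarrow> q \<in> {1..a} \<Longrightarrow>
   pcomm Q x (arr Q (\<alpha> p)) (ap q) = (x (z0, []) - x (om, [])) * (if p = q then 1 else 0)"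
  by (simp add: pcomm_ap arr_ap) (simp add: arr_alpha pvec_def algebra_simps)


lemma Ieq: "x \<in> I \<Longrightarrow> x = y \<Longrightarrow> y \<in> I" by simp

lemma der_cq: "is_der Q I D \<Longrightarrow> f \<in> cq Q \<Longrightarrow> D f \<in> cq Q"
  unfolding is_der_def by blast
lemma der_wd: "is_der Q I D \<Longrightarrow> f \<in> cq Q \<Longrightarrow> g \<in> cq Q \<Longrightarrow> psub f g \<in> I \<Longrightarrow> psub (D f) (D g) \<in> I"
  unfolding is_der_def by blast
lemma der_lin: "is_der Q I D \<Longrightarrow> f \<in> cq Q \<Longrightarrow> g \<in> cq Q \<Longrightarrow> psub (D (padd (psmult c f) g)) (padd (psmult c (D f)) (D g)) \<in> I"
  unfolding is_der_def by blast
lemma der_leib: "is_der Q I D \<Longrightarrow> f \<in> cq Q \<Longrightarrow> g \<in> cq Q \<Longrightarrow> psub (D (pmult Q f g)) (padd (pmult Q (D f) g) (pmult Q f (D g))) \<in> I"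
  unfolding is_der_def by blast
lemma der_idem: "is_der Q I D \<Longrightarrow> v \<in> verts Q \<Longrightarrow> D (idem v) \<in> I"
  unfolding is_der_def by blast

lemma der_add: "is_der Q I D \<Longrightarrow> f \<in> cq Q \<Longrightarrow> g \<in> cq Q \<Longrightarrow> psub (D (padd f g)) (padd (D f) (D g)) \<in> I"
proof -
  assume d: "is_der Q I D" and f: "f \<in> cq Q" and g: "g \<in> cq Q"
  have "psub (D (padd (psmult 1 f) g)) (padd (psmult 1 (D f)) (D g)) \<in> I" by (rule der_lin[OF d f g])
  moreover have "psmult 1 f = f" "psmult 1 (D f) = D f" by (auto simp: psmult_def)
  ultimately show ?thesis by simp
qed

lemma der_pzero: "is_der Q I D \<Longrightarrow> D pzero \<in> I"
proof -
  assume d: "is_der Q I D"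
  have "psub (D (padd pzero pzero)) (padd (D pzero) (D pzero)) \<in> I" by (rule der_add[OF d cq_pzero cq_pzero])
  moreover have "padd pzero pzero = pzero" by (simp add: padd_def pzero_def)
  ultimately have "psub (D pzero) (padd (D pzero) (D pzero)) \<in> I" by metis
  then have "psmult (-1) (psub (D pzero) (padd (D pzero) (D pzero))) \<in> I" by (rule Ismult)
  moreover have "psmult (-1) (psub (D pzero) (padd (D pzero) (D pzero))) = D pzero"
    by (rule ext) (simp add: psmult_def psub_def padd_def)
  ultimately show ?thesis by simp
qed

lemma der_I: "is_der Q I D \<Longrightarrow> x \<in> I \<Longrightarrow> x \<in> cq Q \<Longrightarrow> D x \<in> I"
proof -
  assume d: "is_der Q I D" and x: "x \<in> I" "x \<in> cq Q"
  have "psub x pzero = x" by (rule ext) (simp add: psub_def pzero_def)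
  then have "psub (D x) (D pzero) \<in> I" using der_wd[OF d x(2) cq_pzero] x by simp
  then have "padd (psub (D x) (D pzero)) (D pzero) \<in> I" using Iadd der_pzero[OF d] by blast
  moreover have "padd (psub (D x) (D pzero)) (D pzero) = D x" by (rule ext) (simp add: psub_def padd_def)
  ultimately show ?thesis by simp
qed

lemma is_der_cong: "(\<And>f. f \<in> cq Q \<Longrightarrow> D f = D' f) \<Longrightarrow> is_der Q I D' \<Longrightarrow> is_der Q I D"
  unfolding is_der_def
  by (simp add: cq_padd cq_psmult cq_pmult cq_idem)

lemma is_der_dadd: "is_der Q I D1 \<Longrightarrow> is_der Q I D2 \<Longrightarrow> is_der Q I (dadd D1 D2)"
proof -
  assume d1: "is_der Q I D1" and d2: "is_der Q I D2"
  show ?thesis unfolding is_der_def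
  proof (intro conjI ballI allI impI)
    fix f assume "f \<in> cq Q" then show "dadd D1 D2 f \<in> cq Q"
      using der_cq[OF d1] der_cq[OF d2] by (simp add: dadd_def cq_padd)
  next
    fix f g assume f: "f \<in> cq Q" and g: "g \<in> cq Q" and "psub f g \<in> I"
    then have "padd (psub (D1 f) (D1 g)) (psub (D2 f) (D2 g)) \<in> I"
      using der_wd[OF d1 f g] der_wd[OF d2 f g] Iadd by blast
    then show "psub (dadd D1 D2 f) (dadd D1 D2 g) \<in> I"
      by (rule Ieq) (rule ext, simp add: dadd_def psub_def padd_def)
  next
    fix f g c assume f: "f \<in> cq Q" and g: "g \<in> cq Q"
    have "padd (psub (D1 (padd (psmult c f) g)) (padd (psmult c (D1 f)) (D1 g)))
               (psub (D2 (padd (psmult c f) g)) (padd (psmult c (D2 f)) (D2 g))) \<in> I"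
      using der_lin[OF d1 f g] der_lin[OF d2 f g] Iadd by blast
    then show "psub (dadd D1 D2 (padd (psmult c f) g)) (padd (psmult c (dadd D1 D2 f)) (dadd D1 D2 g)) \<in> I"
      by (rule Ieq) (rule ext, simp add: dadd_def psub_def padd_def psmult_def algebra_simps)
  next
    fix f g assume f: "f \<in> cq Q" and g: "g \<in> cq Q"
    have "padd (psub (D1 (pmult Q f g)) (padd (pmult Q (D1 f) g) (pmult Q f (D1 g))))
               (psub (D2 (pmult Q f g)) (padd (pmult Q (D2 f) g) (pmult Q f (D2 g)))) \<in> I"
      using der_leib[OF d1 f g] der_leib[OF d2 f g] Iadd by blast
    then show "psub (dadd D1 D2 (pmult Q f g)) (padd (pmult Q (dadd D1 D2 f) g) (pmult Q f (dadd D1 D2 g))) \<in> I"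
      unfolding dadd_def pmult_padd_left pmult_padd_right
      by (rule Ieq) (rule ext, simp add: psub_def padd_def algebra_simps)
  next
    fix v assume "v \<in> verts Q"
    then have "padd (D1 (idem v)) (D2 (idem v)) \<in> I" using der_idem[OF d1] der_idem[OF d2] Iadd by blast
    then show "dadd D1 D2 (idem v) \<in> I" by (simp add: dadd_def)
  qed
qed

lemma is_der_dsmult: "is_der Q I D \<Longrightarrow> is_der Q I (dsmult c D)"
proof -
  assume d: "is_der Q I D"
  show ?thesis unfolding is_der_def
  proof (intro conjI ballI allI impI)
    fix f assume "f \<in> cq Q" then show "dsmult c D f \<in> cq Q"
      using der_cq[OF d] by (simp add: dsmult_def cq_psmult)
  next
    fix f g assume f: "f \<in> cq Q" and g: "g \<in> cq Q" and "psub f g \<in> I"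
    then have "psmult c (psub (D f) (D g)) \<in> I" using der_wd[OF d f g] Ismult by blast
    then show "psub (dsmult c D f) (dsmult c D g) \<in> I"
      by (rule Ieq) (rule ext, simp add: dsmult_def psub_def psmult_def algebra_simps)
  next
    fix f g c' assume f: "f \<in> cq Q" and g: "g \<in> cq Q"
    have "psmult c (psub (D (padd (psmult c' f) g)) (padd (psmult c' (D f)) (D g))) \<in> I"
      using der_lin[OF d f g] Ismult by blast
    then show "psub (dsmult c D (padd (psmult c' f) g)) (padd (psmult c' (dsmult c D f)) (dsmult c D g)) \<in> I"
      by (rule Ieq) (rule ext, simp add: dsmult_def psub_def padd_def psmult_def algebra_simps)
  next
    fix f g assume f: "f \<in> cq Q" and g: "g \<in> cq Q"
    have "psmult c (psub (D (pmult Q f g)) (padd (pmult Q (D f) g) (pmult Q f (D g)))) \<in> I"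
      using der_leib[OF d f g] Ismult by blast
    then show "psub (dsmult c D (pmult Q f g)) (padd (pmult Q (dsmult c D f) g) (pmult Q f (dsmult c D g))) \<in> I"
      unfolding dsmult_def pmult_psmult_left pmult_psmult_right
      by (rule Ieq) (rule ext, simp add: psub_def padd_def psmult_def algebra_simps)
  next
    fix v assume "v \<in> verts Q"
    then show "dsmult c D (idem v) \<in> I" using der_idem[OF d] Ismult by (simp add: dsmult_def)
  qed
qed


lemma Icomb2: "A \<in> I \<Longrightarrow> B \<in> I \<Longrightarrow> padd A B = X \<Longrightarrow> X \<in> I"
  using Iadd by blast
lemma Icomb2s: "A \<in> I \<Longrightarrow> B \<in> I \<Longrightarrow> psub A B = X \<Longrightarrow> X \<in> I"
  using Isub by blast

lemma is_der_dbr: "is_der Q I D1 \<Longrightarrow> is_der Q I D2 \<Longrightarrow> is_der Q I (dbr D1 D2)"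
proof -
  assume d1: "is_der Q I D1" and d2: "is_der Q I D2"
  have c1: "\<And>f. f \<in> cq Q \<Longrightarrow> D1 f \<in> cq Q" using der_cq[OF d1] .
  have c2: "\<And>f. f \<in> cq Q \<Longrightarrow> D2 f \<in> cq Q" using der_cq[OF d2] .
  show ?thesis unfolding is_der_def
  proof (intro conjI ballI allI impI)
    fix f assume "f \<in> cq Q" then show "dbr D1 D2 f \<in> cq Q"
      using c1 c2 by (simp add: dbr_def cq_psub)
  next
    fix f g assume f: "f \<in> cq Q" and g: "g \<in> cq Q" and fg: "psub f g \<in> I"
    have a: "psub (D1 (D2 f)) (D1 (D2 g)) \<in> I"
      using der_wd[OF d1 c2[OF f] c2[OF g] der_wd[OF d2 f g fg]] .
    have b: "psub (D2 (D1 f)) (D2 (D1 g)) \<in> I"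
      using der_wd[OF d2 c1[OF f] c1[OF g] der_wd[OF d1 f g fg]] .
    show "psub (dbr D1 D2 f) (dbr D1 D2 g) \<in> I"
      by (rule Icomb2s[OF a b]) (rule ext, simp add: dbr_def psub_def)
  next
    fix f g c assume f: "f \<in> cq Q" and g: "g \<in> cq Q"
    define h where "h = padd (psmult c f) g"
    have h: "h \<in> cq Q" using f g by (simp add: h_def cq_padd cq_psmult)
    define k2 where "k2 = padd (psmult c (D2 f)) (D2 g)"
    define k1 where "k1 = padd (psmult c (D1 f)) (D1 g)"
    have k2: "k2 \<in> cq Q" using c2 f g by (simp add: k2_def cq_padd cq_psmult)
    have k1: "k1 \<in> cq Q" using c1 f g by (simp add: k1_def cq_padd cq_psmult)
    have x1: "psub (D1 (D2 h)) (D1 k2) \<in> I"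
      using der_wd[OF d1 c2[OF h] k2 der_lin[OF d2 f g, where c=c, folded h_def k2_def]] .
    have y1: "psub (D1 k2) (padd (psmult c (D1 (D2 f))) (D1 (D2 g))) \<in> I"
      unfolding k2_def by (rule der_lin[OF d1 c2[OF f] c2[OF g]])
    have x2: "psub (D2 (D1 h)) (D2 k1) \<in> I"
      using der_wd[OF d2 c1[OF h] k1 der_lin[OF d1 f g, where c=c, folded h_def k1_def]] .
    have y2: "psub (D2 k1) (padd (psmult c (D2 (D1 f))) (D2 (D1 g))) \<in> I"
      unfolding k1_def by (rule der_lin[OF d2 c1[OF f] c1[OF g]])
    have "padd (psub (D1 (D2 h)) (D1 k2)) (psub (D1 k2) (padd (psmult c (D1 (D2 f))) (D1 (D2 g)))) \<in> I"
      using x1 y1 Iadd by blast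
    moreover have "padd (psub (D2 (D1 h)) (D2 k1)) (psub (D2 k1) (padd (psmult c (D2 (D1 f))) (D2 (D1 g)))) \<in> I"
      using x2 y2 Iadd by blast
    ultimately show "psub (dbr D1 D2 (padd (psmult c f) g)) (padd (psmult c (dbr D1 D2 f)) (dbr D1 D2 g)) \<in> I"
      unfolding h_def[symmetric]
      by (rule Icomb2s) (rule ext, simp add: dbr_def psub_def padd_def psmult_def algebra_simps)
  next
    fix f g assume f: "f \<in> cq Q" and g: "g \<in> cq Q"
    define k2 where "k2 = padd (pmult Q (D2 f) g) (pmult Q f (D2 g))"
    define k1 where "k1 = padd (pmult Q (D1 f) g) (pmult Q f (D1 g))"
    have k2: "k2 \<in> cq Q" using c2 f g by (simp add: k2_def cq_padd cq_pmult)
    have k1: "k1 \<in> cq Q" using c1 f g by (simp add: k1_def cq_padd cq_pmult)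
    have fg: "pmult Q f g \<in> cq Q" using f g by (rule cq_pmult)
    have x1: "psub (D1 (D2 (pmult Q f g))) (D1 k2) \<in> I"
      using der_wd[OF d1 c2[OF fg] k2 der_leib[OF d2 f g, folded k2_def]] .
    have y1: "psub (D1 k2) (padd (D1 (pmult Q (D2 f) g)) (D1 (pmult Q f (D2 g)))) \<in> I"
      unfolding k2_def by (rule der_add[OF d1 cq_pmult[OF c2[OF f] g] cq_pmult[OF f c2[OF g]]])
    have z1: "psub (D1 (pmult Q (D2 f) g)) (padd (pmult Q (D1 (D2 f)) g) (pmult Q (D2 f) (D1 g))) \<in> I"
      by (rule der_leib[OF d1 c2[OF f] g])
    have w1: "psub (D1 (pmult Q f (D2 g))) (padd (pmult Q (D1 f) (D2 g)) (pmult Q f (D1 (D2 g)))) \<in> I"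
      by (rule der_leib[OF d1 f c2[OF g]])
    have x2: "psub (D2 (D1 (pmult Q f g))) (D2 k1) \<in> I"
      using der_wd[OF d2 c1[OF fg] k1 der_leib[OF d1 f g, folded k1_def]] .
    have y2: "psub (D2 k1) (padd (D2 (pmult Q (D1 f) g)) (D2 (pmult Q f (D1 g)))) \<in> I"
      unfolding k1_def by (rule der_add[OF d2 cq_pmult[OF c1[OF f] g] cq_pmult[OF f c1[OF g]]])
    have z2: "psub (D2 (pmult Q (D1 f) g)) (padd (pmult Q (D2 (D1 f)) g) (pmult Q (D1 f) (D2 g))) \<in> I"
      by (rule der_leib[OF d2 c1[OF f] g])
    have w2: "psub (D2 (pmult Q f (D1 g))) (padd (pmult Q (D2 f) (D1 g)) (pmult Q f (D2 (D1 g)))) \<in> I"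
      by (rule der_leib[OF d2 f c1[OF g]])
    have A: "padd (padd x y) (padd z w) \<in> I" if "x \<in> I" "y \<in> I" "z \<in> I" "w \<in> I" for x y z w
      using that Iadd by blast
    have "psub (padd (padd (psub (D1 (D2 (pmult Q f g))) (D1 k2)) (psub (D1 k2) (padd (D1 (pmult Q (D2 f) g)) (D1 (pmult Q f (D2 g))))))
                      (padd (psub (D1 (pmult Q (D2 f) g)) (padd (pmult Q (D1 (D2 f)) g) (pmult Q (D2 f) (D1 g))))
                            (psub (D1 (pmult Q f (D2 g))) (padd (pmult Q (D1 f) (D2 g)) (pmult Q f (D1 (D2 g)))))))
               (padd (padd (psub (D2 (D1 (pmult Q f g))) (D2 k1)) (psub (D2 k1) (padd (D2 (pmult Q (D1 f) g)) (D2 (pmult Q f (D1 g))))))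
                      (padd (psub (D2 (pmult Q (D1 f) g)) (padd (pmult Q (D2 (D1 f)) g) (pmult Q (D1 f) (D2 g))))
                            (psub (D2 (pmult Q f (D1 g))) (padd (pmult Q (D2 f) (D1 g)) (pmult Q f (D2 (D1 g))))))) \<in> I"
      using A[OF x1 y1 z1 w1] A[OF x2 y2 z2 w2] Isub by blast
    then show "psub (dbr D1 D2 (pmult Q f g)) (padd (pmult Q (dbr D1 D2 f) g) (pmult Q f (dbr D1 D2 g))) \<in> I"
      unfolding dbr_def pmult_psub_left pmult_psub_right
      by (rule Ieq) (rule ext, simp add: psub_def padd_def algebra_simps)
  next
    fix v assume v: "v \<in> verts Q"
    have e1: "D1 (idem v) \<in> I" "D1 (idem v) \<in> cq Q" using der_idem[OF d1 v] c1[OF cq_idem[OF v]] by auto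
    have e2: "D2 (idem v) \<in> I" "D2 (idem v) \<in> cq Q" using der_idem[OF d2 v] c2[OF cq_idem[OF v]] by auto
    have "D1 (D2 (idem v)) \<in> I" using der_I[OF d1 e2] .
    moreover have "D2 (D1 (idem v)) \<in> I" using der_I[OF d2 e1] .
    ultimately show "dbr D1 D2 (idem v) \<in> I" by (simp add: dbr_def Isub)
  qed
qed


lemma jacobi: "pcomm Q (pcomm Q x y) f = psub (pcomm Q x (pcomm Q y f)) (pcomm Q y (pcomm Q x f))"
  unfolding pcomm_def pmult_psub_left pmult_psub_right pmult_assoc[OF wf]
  by (rule ext) (simp add: psub_def algebra_simps)

lemma pcomm_padd_left: "pcomm Q (padd x y) f = padd (pcomm Q x f) (pcomm Q y f)"
  unfolding pcomm_def pmult_padd_left pmult_padd_right by (rule ext) (simp add: psub_def padd_def)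
lemma pcomm_padd_right: "pcomm Q x (padd f g) = padd (pcomm Q x f) (pcomm Q x g)"
  unfolding pcomm_def pmult_padd_left pmult_padd_right by (rule ext) (simp add: psub_def padd_def)
lemma pcomm_psub_left: "pcomm Q (psub x y) f = psub (pcomm Q x f) (pcomm Q y f)"
  unfolding pcomm_def pmult_psub_left pmult_psub_right by (rule ext) (simp add: psub_def)
lemma pcomm_psmult_left: "pcomm Q (psmult c x) f = psmult c (pcomm Q x f)"
  unfolding pcomm_def pmult_psmult_left pmult_psmult_right by (rule ext) (simp add: psub_def psmult_def algebra_simps)
lemma pcomm_pzero_left: "pcomm Q pzero f = pzero"
  unfolding pcomm_def pmult_pzero_left pmult_pzero_right by (rule ext) (simp add: psub_def pzero_def)

lemma pcomm_I: "x \<in> cq Q \<Longrightarrow> y \<in> I \<Longrightarrow> pcomm Q x y \<in> I"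
  unfolding pcomm_def using Imul Isub by blast

definition Dg :: "('v,'e) pelem \<Rightarrow> bool" where
  "Dg x \<longleftrightarrow> x \<in> cq Q \<and> (\<forall>v\<in>verts Q. pcomm Q x (idem v) \<in> I)"

definition Rep :: "('v,'e) dmap \<Rightarrow> ('v,'e) pelem \<Rightarrow> (nat \<Rightarrow> nat \<Rightarrow> complex) \<Rightarrow> bool" where
  "Rep D x T \<longleftrightarrow> Dg x \<and> trc a T = 0 \<and> (\<forall>f\<in>cq Q. psub (D f) (padd (pcomm Q x f) (L T f)) \<in> I)"

definition Inv :: "('v,'e) dmap \<Rightarrow> bool" where
  "Inv D \<longleftrightarrow> is_der Q I D \<and> (\<exists>x T. Rep D x T)"

lemma Dg_pzero: "Dg pzero"
  by (simp add: Dg_def cq_pzero pcomm_pzero_left I0)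

lemma Dg_padd: "Dg x \<Longrightarrow> Dg y \<Longrightarrow> Dg (padd x y)"
  by (simp add: Dg_def cq_padd pcomm_padd_left Iadd)
lemma Dg_psub: "Dg x \<Longrightarrow> Dg y \<Longrightarrow> Dg (psub x y)"
  by (simp add: Dg_def cq_psub pcomm_psub_left Isub)
lemma Dg_psmult: "Dg x \<Longrightarrow> Dg (psmult c x)"
  by (simp add: Dg_def cq_psmult pcomm_psmult_left Ismult)
lemma Dg_pcomm: "Dg x \<Longrightarrow> Dg y \<Longrightarrow> Dg (pcomm Q x y)"
  unfolding Dg_def
proof (intro conjI ballI)
  assume x: "x \<in> cq Q \<and> (\<forall>v\<in>verts Q. pcomm Q x (idem v) \<in> I)"
    and y: "y \<in> cq Q \<and> (\<forall>v\<in>verts Q. pcomm Q y (idem v) \<in> I)"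
  show "pcomm Q x y \<in> cq Q" using x y by (simp add: cq_pcomm)
  fix v assume v: "v \<in> verts Q"
  have "psub (pcomm Q x (pcomm Q y (idem v))) (pcomm Q y (pcomm Q x (idem v))) \<in> I"
    using pcomm_I x y v Isub by blast
  then show "pcomm Q (pcomm Q x y) (idem v) \<in> I" by (simp add: jacobi)
qed

lemma trc_add: "trc a (\<lambda>p q. T1 p q + T2 p q) = trc a T1 + trc a T2"
  by (simp add: trc_def sum.distrib)
lemma trc_smult: "trc a (\<lambda>p q. c * T p q) = c * trc a T"
  by (simp add: trc_def sum_distrib_left)
lemma trc_comm: "trc a (\<lambda>p q. mm a A B p q - mm a B A p q) = 0"
proof -
  have "(\<Sum>p\<in>{1..a}. \<Sum>r\<in>{1..a}. A p r * B r p) = (\<Sum>r\<in>{1..a}. \<Sum>p\<in>{1..a}. A p r * B r p)"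
    by (rule sum.swap)
  then show ?thesis by (simp add: trc_def mm_def sum_subtractf mult.commute)
qed

lemma L_Tadd: "L (\<lambda>p q. T1 p q + T2 p q) f = padd (L T1 f) (L T2 f)"
  using L_Tlin[of 1 T1 T2 f] by (simp add: psmult_def)

lemma Rep_add: "Rep D1 x1 T1 \<Longrightarrow> Rep D2 x2 T2 \<Longrightarrow> Rep (dadd D1 D2) (padd x1 x2) (\<lambda>p q. T1 p q + T2 p q)"
  unfolding Rep_def
proof (intro conjI ballI)
  assume r1: "Dg x1 \<and> trc a T1 = 0 \<and> (\<forall>f\<in>cq Q. psub (D1 f) (padd (pcomm Q x1 f) (L T1 f)) \<in> I)"
    and r2: "Dg x2 \<and> trc a T2 = 0 \<and> (\<forall>f\<in>cq Q. psub (D2 f) (padd (pcomm Q x2 f) (L T2 f)) \<in> I)"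
  show "Dg (padd x1 x2)" using r1 r2 Dg_padd by blast
  show "trc a (\<lambda>p q. T1 p q + T2 p q) = 0" using r1 r2 by (simp add: trc_add)
  fix f assume f: "f \<in> cq Q"
  have "padd (psub (D1 f) (padd (pcomm Q x1 f) (L T1 f))) (psub (D2 f) (padd (pcomm Q x2 f) (L T2 f))) \<in> I"
    using r1 r2 f Iadd by blast
  then show "psub (dadd D1 D2 f) (padd (pcomm Q (padd x1 x2) f) (L (\<lambda>p q. T1 p q + T2 p q) f)) \<in> I"
    unfolding L_Tadd pcomm_padd_left
    by (rule Ieq) (rule ext, simp add: dadd_def psub_def padd_def)
qed

lemma L_Tsmult: "L (\<lambda>p q. c * T p q) f = psmult c (L T f)"
  using L_Tlin[of c T "\<lambda>p q. 0" f] L_T0[of f] by (rule_tac ext) (simp add: psmult_def padd_def pzero_def)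

lemma Rep_smult: "Rep D x T \<Longrightarrow> Rep (dsmult c D) (psmult c x) (\<lambda>p q. c * T p q)"
  unfolding Rep_def
proof (intro conjI ballI)
  assume r: "Dg x \<and> trc a T = 0 \<and> (\<forall>f\<in>cq Q. psub (D f) (padd (pcomm Q x f) (L T f)) \<in> I)"
  show "Dg (psmult c x)" using r Dg_psmult by blast
  show "trc a (\<lambda>p q. c * T p q) = 0" using r by (simp add: trc_smult)
  fix f assume f: "f \<in> cq Q"
  have "psmult c (psub (D f) (padd (pcomm Q x f) (L T f))) \<in> I"
    using r f Ismult by blast
  then show "psub (dsmult c D f) (padd (pcomm Q (psmult c x) f) (L (\<lambda>p q. c * T p q) f)) \<in> I"
    unfolding L_Tsmult pcomm_psmult_left
    by (rule Ieq) (rule ext, simp add: dsmult_def psub_def padd_def psmult_def algebra_simps)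
qed

lemma Rep_inner: "is_inner Q I D \<Longrightarrow> \<exists>x. Rep D x (\<lambda>p q. 0)"
proof -
  have pz: "padd y pzero = y" for y :: "('v,'e) pelem" by (rule ext) (simp add: padd_def pzero_def)
  assume "is_inner Q I D"
  then show ?thesis unfolding is_inner_def Rep_def Dg_def by (auto simp: L_T0 trc_def pz)
qed


lemma Dg_ap: "Dg x \<Longrightarrow> r \<in> {1..a} \<Longrightarrow> x (ap r) = 0"
  unfolding Dg_def using Dg_alpha by blast

lemma Rep_br:
  assumes d1: "is_der Q I D1" and d2: "is_der Q I D2" and r1: "Rep D1 x1 T1" and r2: "Rep D2 x2 T2"
  shows "Rep (dbr D1 D2) (pcomm Q x1 x2) (\<lambda>p q. mm a T2 T1 p q - mm a T1 T2 p q)"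
  unfolding Rep_def
proof (intro conjI ballI)
  have g1: "Dg x1" and g2: "Dg x2" using r1 r2 by (auto simp: Rep_def)
  show "Dg (pcomm Q x1 x2)" using Dg_pcomm[OF g1 g2] .
  show "trc a (\<lambda>p q. mm a T2 T1 p q - mm a T1 T2 p q) = 0" by (rule trc_comm)
  fix f assume f: "f \<in> cq Q"
  have x1c: "x1 \<in> cq Q" and x2c: "x2 \<in> cq Q" using g1 g2 by (auto simp: Dg_def)
  define k2 where "k2 = padd (pcomm Q x2 f) (L T2 f)"
  define k1 where "k1 = padd (pcomm Q x1 f) (L T1 f)"
  have k2: "k2 \<in> cq Q" using x2c f by (simp add: k2_def cq_padd cq_pcomm L_cq)
  have k1: "k1 \<in> cq Q" using x1c f by (simp add: k1_def cq_padd cq_pcomm L_cq)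
  have h1: "psub (D1 (D2 f)) (D1 k2) \<in> I"
    using der_wd[OF d1 der_cq[OF d2 f] k2] r2 f unfolding Rep_def k2_def by blast
  have h2: "psub (D1 k2) (padd (pcomm Q x1 k2) (L T1 k2)) \<in> I"
    using r1 k2 unfolding Rep_def by blast
  have h3: "psub (D2 (D1 f)) (D2 k1) \<in> I"
    using der_wd[OF d2 der_cq[OF d1 f] k1] r1 f unfolding Rep_def k1_def by blast
  have h4: "psub (D2 k1) (padd (pcomm Q x2 k1) (L T2 k1)) \<in> I"
    using r2 k1 unfolding Rep_def by blast
  have a1: "\<And>r. r \<in> {1..a} \<Longrightarrow> x1 (ap r) = 0" using Dg_ap[OF g1] .
  have a2: "\<And>r. r \<in> {1..a} \<Longrightarrow> x2 (ap r) = 0" using Dg_ap[OF g2] .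
  have E: "psub (padd (pcomm Q x1 k2) (L T1 k2)) (padd (pcomm Q x2 k1) (L T2 k1))
      = padd (pcomm Q (pcomm Q x1 x2) f) (L (\<lambda>p q. mm a T2 T1 p q - mm a T1 T2 p q) f)"
  proof -
    have e1: "L T (pcomm Q x1 g) = psmult (x1 (z0, []) - x1 (om, [])) (L T g)" for T g
      using L_pcomm[where x=x1, OF a1] .
    have e2: "L T (pcomm Q x2 g) = psmult (x2 (z0, []) - x2 (om, [])) (L T g)" for T g
      using L_pcomm[where x=x2, OF a2] .
    show ?thesis
    unfolding k1_def k2_def pcomm_padd_right L_padd pcomm_L e1 e2 L_comp
      jacobi L_Tdiff
    by (rule ext) (simp add: psub_def padd_def psmult_def algebra_simps)
  qed
  have "psub (padd (psub (D1 (D2 f)) (D1 k2)) (psub (D1 k2) (padd (pcomm Q x1 k2) (L T1 k2))))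
             (padd (psub (D2 (D1 f)) (D2 k1)) (psub (D2 k1) (padd (pcomm Q x2 k1) (L T2 k1)))) \<in> I"
    using h1 h2 h3 h4 Iadd Isub by blast
  then show "psub (dbr D1 D2 f) (padd (pcomm Q (pcomm Q x1 x2) f) (L (\<lambda>p q. mm a T2 T1 p q - mm a T1 T2 p q) f)) \<in> I"
    unfolding E[symmetric]
    by (rule Ieq) (rule ext, simp add: dbr_def psub_def padd_def)
qed

lemma Inv_lie_gen:
  assumes "D \<in> lie_gen Q I G" and "\<And>D. D \<in> G \<Longrightarrow> Inv D"
  shows "Inv D"
  using assms(1)
proof induction
  case (gen D) then show ?case using assms(2) by blast
next
  case (inner D) then obtain x where "Rep D x (\<lambda>p q. 0)" using Rep_inner by blast
  then show ?case using inner by (auto simp: Inv_def)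
next
  case (add D1 D2) then show ?case using Rep_add is_der_dadd by (meson Inv_def)
next
  case (smult D c) then show ?case using Rep_smult is_der_dsmult by (meson Inv_def)
next
  case (br D1 D2) then show ?case using Rep_br is_der_dbr by (meson Inv_def)
qed


definition Mt :: "('v,'e) dmap \<Rightarrow> nat \<Rightarrow> nat \<Rightarrow> complex" where
  "Mt D = (\<lambda>p q. D (arr Q (\<alpha> p)) (ap q))"

lemma cq_arr: "p \<in> {1..a} \<Longrightarrow> arr Q (\<alpha> p) \<in> cq Q"
  by (simp add: arr_alpha cq_pvec qpath_ap)

lemma Rep_Mt: assumes "Rep D x T" "p \<in> {1..a}" "q \<in> {1..a}"
  shows "Mt D p q = (x (z0, []) - x (om, [])) * (if p = q then 1 else 0) + T p q"
proof -
  have "psub (D (arr Q (\<alpha> p))) (padd (pcomm Q x (arr Q (\<alpha> p))) (L T (arr Q (\<alpha> p)))) \<in> I"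
    using assms cq_arr unfolding Rep_def by blast
  then have "psub (D (arr Q (\<alpha> p))) (padd (pcomm Q x (arr Q (\<alpha> p))) (L T (arr Q (\<alpha> p)))) (ap q) = 0"
    by (rule Ialpha)
  then show ?thesis using assms(2,3) by (simp add: Mt_def psub_def padd_def pcomm_arr L_arr)
qed

lemma inner_Mt: assumes "der_eq Q I D1 D2"
  shows "\<exists>s. \<forall>p\<in>{1..a}. \<forall>q\<in>{1..a}. Mt D1 p q - Mt D2 p q = s * (if p = q then 1 else 0)"
proof -
  obtain x where x: "\<forall>f\<in>cq Q. psub (dsub D1 D2 f) (pcomm Q x f) \<in> I"
    using assms unfolding der_eq_def is_inner_def by blast
  have "Mt D1 p q - Mt D2 p q = (x (z0, []) - x (om, [])) * (if p = q then 1 else 0)"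
    if p: "p \<in> {1..a}" and q: "q \<in> {1..a}" for p q
  proof -
    have "psub (dsub D1 D2 (arr Q (\<alpha> p))) (pcomm Q x (arr Q (\<alpha> p))) (ap q) = 0"
      using x cq_arr[OF p] Ialpha by blast
    then show ?thesis using p q by (simp add: Mt_def psub_def dsub_def pcomm_arr)
  qed
  then show ?thesis by blast
qed

lemma Mt_der_eq:
  assumes i1: "Inv D1" and i2: "Inv D2"
    and s: "\<forall>p\<in>{1..a}. \<forall>q\<in>{1..a}. Mt D1 p q - Mt D2 p q = s * (if p = q then 1 else 0)"
  shows "der_eq Q I D1 D2"
proof -
  obtain x1 T1 where r1: "Rep D1 x1 T1" using i1 by (auto simp: Inv_def)
  obtain x2 T2 where r2: "Rep D2 x2 T2" using i2 by (auto simp: Inv_def)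
  define t where "t = s - (x1 (z0, []) - x1 (om, [])) + (x2 (z0, []) - x2 (om, []))"
  have td: "T1 p q - T2 p q = t * (if p = q then 1 else 0)" if p: "p \<in> {1..a}" and q: "q \<in> {1..a}" for p q
    using s p q Rep_Mt[OF r1 p q] Rep_Mt[OF r2 p q] by (auto simp: t_def algebra_simps)
  have eqT: "T1 p q = T2 p q" if p: "p \<in> {1..a}" and q: "q \<in> {1..a}" for p q
  proof -
    have "trc a T1 - trc a T2 = (\<Sum>p\<in>{1..a}. T1 p p - T2 p p)" by (simp add: trc_def sum_subtractf)
    also have "\<dots> = (\<Sum>p\<in>{1..a}. t)" using td by (intro sum.cong) auto
    finally have "of_nat a * t = 0" using r1 r2 by (simp add: Rep_def)
    moreover have "a \<noteq> 0" using p by auto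
    ultimately have "t = 0" by simp
    then show ?thesis using td[OF p q] by simp
  qed
  have LL: "L T1 f = L T2 f" for f by (rule L_Tcong) (use eqT in auto)
  have g1: "Dg x1" and g2: "Dg x2" using r1 r2 by (auto simp: Rep_def)
  show ?thesis unfolding der_eq_def is_inner_def
  proof (intro bexI conjI ballI)
    show "psub x1 x2 \<in> cq Q" using Dg_psub[OF g1 g2] by (simp add: Dg_def)
    fix v assume "v \<in> verts Q" then show "pcomm Q (psub x1 x2) (idem v) \<in> I"
      using Dg_psub[OF g1 g2] by (simp add: Dg_def)
  next
    fix f assume f: "f \<in> cq Q"
    have "psub (psub (D1 f) (padd (pcomm Q x1 f) (L T1 f))) (psub (D2 f) (padd (pcomm Q x2 f) (L T2 f))) \<in> I"
      using r1 r2 f Isub unfolding Rep_def by blast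
    then show "psub (dsub D1 D2 f) (pcomm Q (psub x1 x2) f) \<in> I"
      unfolding LL pcomm_psub_left by (rule Ieq) (rule ext, simp add: dsub_def psub_def padd_def)
  qed
qed

lemma der_eq_same: "(\<And>f. f \<in> cq Q \<Longrightarrow> D1 f = D2 f) \<Longrightarrow> der_eq Q I D1 D2"
  unfolding der_eq_def is_inner_def
  by (rule bexI[where x=pzero]) (auto simp: pcomm_pzero_left dsub_def psub_self I0 cq_pzero)

lemma Mt_L: "p \<in> {1..a} \<Longrightarrow> q \<in> {1..a} \<Longrightarrow> Mt (L T) p q = T p q"
  by (simp add: Mt_def L_arr)


lemma arrder_alpha:
  assumes f: "f \<in> cq Q" and p: "p \<in> {1..a}" and q: "q \<in> {1..a}"
  shows "arrder Q (\<alpha> p) (arr Q (\<alpha> q)) f = psmult (f (ap p)) (arr Q (\<alpha> q))"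
proof (rule ext)
  fix P :: "('v,'e) path"
  define \<delta> where "\<delta> = (\<lambda>b. if b = \<alpha> p then arr Q (\<alpha> q) else pzero)"
  define tm where "tm q' i = pmult Q (pmult Q (pvec (fst q', take i (snd q'))) (\<delta> (snd q' ! i)))
                              (pvec (tgt Q (snd q' ! i), drop (Suc i) (snd q'))) P" for q' :: "('v,'e) path" and i
  have A: "pmult Q (pmult Q (idem z0) (arr Q (\<alpha> q))) (idem om) P = arr Q (\<alpha> q) P"
  proof -
    have ar: "arr Q (\<alpha> q) P = (if P = ap q then 1 else 0)" by (simp add: arr_alpha[OF q] pvec_def)
    show ?thesis
      by (cases "P = ap q") (simp_all add: ar pmult_idem_left pmult_idem_right qpath_ap[OF q] pend_def al[OF q])
  qed
  have inner: "(\<Sum>i<length (snd q'). tm q' i) = (if q' = ap p then arr Q (\<alpha> q) P else 0)"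
    if "f q' \<noteq> 0" for q'
  proof -
    have qq: "qpath Q q'" using that f unfolding cq_def by blast
    show ?thesis
    proof (cases "q' = ap p")
      case True
      then show ?thesis using A al[OF p]
        by (simp add: tm_def \<delta>_def idem_def)
    next
      case False
      have "tm q' i = 0" if i: "i < length (snd q')" for i
      proof -
        have "snd q' ! i \<noteq> \<alpha> p"
        proof
          assume "snd q' ! i = \<alpha> p"
          then have "\<alpha> p \<in> set (snd q')" using i by (metis nth_mem)
          then have "(fst q', snd q') = ap p" using alpha_path[of "fst q'" "snd q'" p] qq p by simp
          then show False using False by simp
        qed
        then show ?thesis by (simp add: tm_def \<delta>_def pmult_pzero_left pmult_pzero_right) (simp add: pzero_def)
      qed
      then show ?thesis using False by simp
    qed
  qed
  have "arrder Q (\<alpha> p) (arr Q (\<alpha> q)) f P = (\<Sum>q'\<in>{q'. f q' \<noteq> 0}. f q' * (\<Sum>i<length (snd q'). tm q' i))"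
    by (simp add: arrder_def free_der_def tm_def \<delta>_def)
  also have "\<dots> = (\<Sum>q'\<in>{q'. f q' \<noteq> 0}. if q' = ap p then f q' * arr Q (\<alpha> q) P else 0)"
    by (rule sum.cong) (auto simp: inner)
  also have "\<dots> = f (ap p) * arr Q (\<alpha> q) P"
    using f by (simp add: cq_def)
  finally show "arrder Q (\<alpha> p) (arr Q (\<alpha> q)) f P = psmult (f (ap p)) (arr Q (\<alpha> q)) P"
    by (simp add: psmult_def)
qed

definition Em :: "nat \<Rightarrow> nat \<Rightarrow> nat \<Rightarrow> nat \<Rightarrow> complex" where
  "Em p q = (\<lambda>p' q'. if p' = p \<and> q' = q then 1 else 0)"

lemma asupp_arr: "q \<in> {1..a} \<Longrightarrow> asupp (arr Q (\<alpha> q))"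
  unfolding asupp_def by (auto simp: arr_alpha pvec_def)

lemma arrder_L:
  assumes f: "f \<in> cq Q" and p: "p \<in> {1..a}" and q: "q \<in> {1..a}"
  shows "arrder Q (\<alpha> p) (arr Q (\<alpha> q)) f = L (Em p q) f"
  unfolding arrder_alpha[OF assms]
proof (rule asupp_eq[OF asupp_psmult[OF asupp_arr[OF q]] asupp_L])
  fix r assume r: "r \<in> {1..a}"
  have "L (Em p q) f (ap r) = (\<Sum>p'\<in>{1..a}. (if p' = p \<and> r = q then 1 else 0) * f (ap p'))"
    using r by (simp add: L_at Em_def)
  also have "\<dots> = (\<Sum>p'\<in>{1..a}. if p' = p then (if r = q then f (ap p') else 0) else 0)"
    by (rule sum.cong) auto
  also have "\<dots> = (if r = q then f (ap p) else 0)"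
    using p by simp
  finally show "psmult (f (ap p)) (arr Q (\<alpha> q)) (ap r) = L (Em p q) f (ap r)"
    using q r by (simp add: psmult_def arr_ap eq_commute[of q])
qed


lemma Inv_L: assumes "\<And>f. f \<in> cq Q \<Longrightarrow> D f = L T f" and "trc a T = 0"
  shows "Inv D"
  unfolding Inv_def
proof (intro conjI exI)
  show "is_der Q I D" using is_der_cong[OF assms(1) is_der_L] .
  show "Rep D pzero T" unfolding Rep_def
  proof (intro conjI ballI)
    show "Dg pzero" by (rule Dg_pzero)
    show "trc a T = 0" by (rule assms(2))
    fix f assume "f \<in> cq Q"
    then have "psub (D f) (padd (pcomm Q pzero f) (L T f)) = pzero"
      using assms(1) unfolding pcomm_pzero_left by (rule_tac ext) (simp add: psub_def padd_def pzero_def)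
    then show "psub (D f) (padd (pcomm Q pzero f) (L T f)) \<in> I" using I0 by simp
  qed
qed

lemma trc_Em: "p \<in> {1..a} \<Longrightarrow> trc a (Em p q) = (if p = q then 1 else 0)"
proof -
  assume p: "p \<in> {1..a}"
  have "trc a (Em p q) = (\<Sum>p'\<in>{1..a}. if p' = p then (if p = q then 1 else 0) else 0)"
    unfolding trc_def Em_def by (rule sum.cong) auto
  then show ?thesis using p by simp
qed

lemma Inv_w: "p \<in> {1..a} \<Longrightarrow> q \<in> {1..a} \<Longrightarrow> p \<noteq> q \<Longrightarrow> Inv (w_der Q \<alpha> p q)"
  by (rule Inv_L[where T="Em p q"]) (simp_all add: w_der_def arrder_L trc_Em)

lemma Inv_x: "2 \<le> j \<Longrightarrow> j \<le> a \<Longrightarrow> Inv (x_der Q \<alpha> j)"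
proof (rule Inv_L[where T="\<lambda>p q. Em j j p q - Em 1 1 p q"])
  assume j: "2 \<le> j" "j \<le> a"
  then have j1: "j \<in> {1..a}" "1 \<in> {1..a}" by auto
  fix f assume "f \<in> cq Q"
  then show "x_der Q \<alpha> j f = L (\<lambda>p q. Em j j p q - Em 1 1 p q) f"
    using j1 by (simp add: x_der_def dsub_def arrder_L L_Tdiff)
next
  assume j: "2 \<le> j" "j \<le> a"
  then have j1: "j \<in> {1..a}" "1 \<in> {1..a}" by auto
  show "trc a (\<lambda>p q. Em j j p q - Em 1 1 p q) = 0"
    using trc_Em[OF j1(1), of j] trc_Em[OF j1(2), of 1] by (simp add: trc_def sum_subtractf)
qed

lemma Mt_dadd: "Mt (dadd D1 D2) p q = Mt D1 p q + Mt D2 p q" by (simp add: Mt_def dadd_def padd_def)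
lemma Mt_dsmult: "Mt (dsmult c D) p q = c * Mt D p q" by (simp add: Mt_def dsmult_def psmult_def)

lemma Mt_L_eq: "(\<And>f. f \<in> cq Q \<Longrightarrow> D f = L T f) \<Longrightarrow> p \<in> {1..a} \<Longrightarrow> q \<in> {1..a} \<Longrightarrow> Mt D p q = T p q"
  using cq_arr by (simp add: Mt_def L_arr)


definition Gs :: "('v,'e) dmap set" where
  "Gs = {w_der Q \<alpha> p q | p q. p \<noteq> q \<and> p \<in> {1..a} \<and> q \<in> {1..a}} \<union> {x_der Q \<alpha> j | j. 2 \<le> j \<and> j \<le> a}"

lemma Inv_S: "D \<in> lie_gen Q I Gs \<Longrightarrow> Inv D"
  by (rule Inv_lie_gen) (auto simp: Gs_def intro: Inv_w Inv_x)

definition ach :: "(nat \<Rightarrow> nat \<Rightarrow> complex) \<Rightarrow> bool" where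
  "ach M \<longleftrightarrow> (\<exists>D\<in>lie_gen Q I Gs. \<forall>p\<in>{1..a}. \<forall>q\<in>{1..a}. Mt D p q = M p q)"

lemma zero_S: "(\<lambda>f. pzero) \<in> lie_gen Q I Gs"
proof (rule lie_gen.inner)
  have pz: "psub pzero pzero = pzero" "padd pzero pzero = pzero" "psmult c pzero = pzero" for c :: complex
    by (auto simp: psub_def padd_def psmult_def pzero_def)
  show "is_der Q I (\<lambda>f. pzero)" unfolding is_der_def by (simp add: pz I0 cq_pzero pmult_pzero_left pmult_pzero_right)
  show "is_inner Q I (\<lambda>f. pzero)" unfolding is_inner_def
    by (rule bexI[where x=pzero]) (simp_all add: pcomm_pzero_left pz I0 cq_pzero)
qed

lemma ach_zero: "ach (\<lambda>p q. 0)"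
  unfolding ach_def using zero_S by (force simp: Mt_def pzero_def)

lemma ach_add: "ach A \<Longrightarrow> ach B \<Longrightarrow> ach (\<lambda>p q. A p q + B p q)"
  unfolding ach_def by (metis Mt_dadd lie_gen.add)

lemma ach_smult: "ach A \<Longrightarrow> ach (\<lambda>p q. c * A p q)"
  unfolding ach_def by (metis Mt_dsmult lie_gen.smult)

lemma ach_cong: "ach A \<Longrightarrow> (\<And>p q. p \<in> {1..a} \<Longrightarrow> q \<in> {1..a} \<Longrightarrow> A p q = B p q) \<Longrightarrow> ach B"
  unfolding ach_def by metis

lemma ach_sum: "finite X \<Longrightarrow> (\<And>i. i \<in> X \<Longrightarrow> ach (F i)) \<Longrightarrow> ach (\<lambda>p q. \<Sum>i\<in>X. F i p q)"
proof (induction X rule: finite_induct)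
  case empty then show ?case using ach_zero by simp
next
  case (insert x X)
  then have "ach (\<lambda>p q. F x p q + (\<Sum>i\<in>X. F i p q))" by (intro ach_add) auto
  then show ?case using insert by simp
qed

lemma ach_w: "p \<in> {1..a} \<Longrightarrow> q \<in> {1..a} \<Longrightarrow> p \<noteq> q \<Longrightarrow> ach (Em p q)"
  unfolding ach_def
  by (rule bexI[where x="w_der Q \<alpha> p q"]) (auto simp: Gs_def w_der_def arrder_L intro: Mt_L_eq lie_gen.gen)

lemma ach_x: "2 \<le> j \<Longrightarrow> j \<le> a \<Longrightarrow> ach (\<lambda>p q. Em j j p q - Em 1 1 p q)"
  unfolding ach_def
proof (rule bexI[where x="x_der Q \<alpha> j"])
  assume j: "2 \<le> j" "j \<le> a"
  then have j1: "j \<in> {1..a}" "1 \<in> {1..a}" by auto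
  show "x_der Q \<alpha> j \<in> lie_gen Q I Gs" using j by (auto simp: Gs_def intro: lie_gen.gen)
  show "\<forall>p\<in>{1..a}. \<forall>q\<in>{1..a}. Mt (x_der Q \<alpha> j) p q = Em j j p q - Em 1 1 p q"
    using j1 by (auto intro!: Mt_L_eq simp: x_der_def dsub_def arrder_L L_Tdiff)
qed

lemma ach_traceless: assumes t: "trc a T = 0" shows "ach T"
proof -
  define OD where "OD = {(p,q). p \<in> {1..a} \<and> q \<in> {1..a} \<and> p \<noteq> q}"
  have fOD: "finite OD" unfolding OD_def by (rule finite_subset[of _ "{1..a} \<times> {1..a}"]) auto
  have a1: "ach (\<lambda>p q. \<Sum>x\<in>OD. T (fst x) (snd x) * Em (fst x) (snd x) p q)"
    by (rule ach_sum[OF fOD]) (auto simp: OD_def intro!: ach_smult ach_w)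
  have a2: "ach (\<lambda>p q. \<Sum>j\<in>{2..a}. T j j * (Em j j p q - Em 1 1 p q))"
  proof (rule ach_sum)
    fix j assume "j \<in> {2..a}"
    then show "ach (\<lambda>p q. T j j * (Em j j p q - Em 1 1 p q))"
      using ach_smult[OF ach_x[of j], of "T j j"] by simp
  qed simp
  have "ach (\<lambda>p q. (\<Sum>x\<in>OD. T (fst x) (snd x) * Em (fst x) (snd x) p q) + (\<Sum>j\<in>{2..a}. T j j * (Em j j p q - Em 1 1 p q)))"
    using ach_add[OF a1 a2] .
  then show ?thesis
  proof (rule ach_cong)
    fix p q assume p: "p \<in> {1..a}" and q: "q \<in> {1..a}"
    have s1: "(\<Sum>x\<in>OD. T (fst x) (snd x) * Em (fst x) (snd x) p q) = (if p \<noteq> q then T p q else 0)"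
    proof -
      have "(\<Sum>x\<in>OD. T (fst x) (snd x) * Em (fst x) (snd x) p q) = (\<Sum>x\<in>OD. if x = (p,q) then T p q else 0)"
        by (rule sum.cong) (auto simp: Em_def)
      also have "\<dots> = (if (p,q) \<in> OD then T p q else 0)" using fOD by (simp add: sum.delta')
      finally show ?thesis using p q by (simp add: OD_def)
    qed
    have s2: "(\<Sum>j\<in>{2..a}. T j j * (Em j j p q - Em 1 1 p q))
        = (\<Sum>j\<in>{2..a}. if j = p then (if p = q then T j j else 0) else 0) - (if p = 1 \<and> q = 1 then (\<Sum>j\<in>{2..a}. T j j) else 0)"
      by (simp add: Em_def right_diff_distrib sum_subtractf sum_distrib_right[symmetric] if_distrib cong: if_cong)
        (auto intro!: sum.cong simp: sum_negf)
    have tr: "T 1 1 + (\<Sum>j\<in>{2..a}. T j j) = 0"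
    proof -
      have "{1..a} = insert 1 {2..a}" using p by auto
      then show ?thesis using t by (simp add: trc_def)
    qed
    show "(\<Sum>x\<in>OD. T (fst x) (snd x) * Em (fst x) (snd x) p q) + (\<Sum>j\<in>{2..a}. T j j * (Em j j p q - Em 1 1 p q)) = T p q"
      unfolding s1 s2 using p q tr by (auto simp: eq_neg_iff_add_eq_0 add.commute) (metis add.commute add_eq_0_iff)
  qed
qed


lemma mm_shift:
  assumes p: "p \<in> {1..a}" and q: "q \<in> {1..a}"
    and A: "\<And>p q. p \<in> {1..a} \<Longrightarrow> q \<in> {1..a} \<Longrightarrow> A p q = c * (if p = q then 1 else 0) + A' p q"
    and B: "\<And>p q. p \<in> {1..a} \<Longrightarrow> q \<in> {1..a} \<Longrightarrow> B p q = d * (if p = q then 1 else 0) + B' p q"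
  shows "mm a A B p q = c * d * (if p = q then 1 else 0) + c * B' p q + d * A' p q + mm a A' B' p q"
proof -
  have "mm a A B p q = (\<Sum>r\<in>{1..a}. (if r = p then c * d * (if p = q then 1 else 0) + c * B' p q else 0)
       + (if r = q then d * A' p q else 0) + A' p r * B' r q)"
    unfolding mm_def using p q by (intro sum.cong) (auto simp: A B algebra_simps)
  also have "\<dots> = c * d * (if p = q then 1 else 0) + c * B' p q + d * A' p q + mm a A' B' p q"
    using p q by (simp add: sum.distrib mm_def)
  finally show ?thesis .
qed

lemma br_Mt:
  assumes i1: "Inv D1" and i2: "Inv D2"
  shows "\<exists>s. \<forall>p\<in>{1..a}. \<forall>q\<in>{1..a}.
     Mt (dbr D1 D2) p q - (mm a (Mt D2) (Mt D1) p q - mm a (Mt D1) (Mt D2) p q) = s * (if p = q then 1 else 0)"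
proof -
  obtain x1 T1 where r1: "Rep D1 x1 T1" and d1: "is_der Q I D1" using i1 by (auto simp: Inv_def)
  obtain x2 T2 where r2: "Rep D2 x2 T2" and d2: "is_der Q I D2" using i2 by (auto simp: Inv_def)
  have rb: "Rep (dbr D1 D2) (pcomm Q x1 x2) (\<lambda>p q. mm a T2 T1 p q - mm a T1 T2 p q)"
    by (rule Rep_br[OF d1 d2 r1 r2])
  define c1 where "c1 = x1 (z0, []) - x1 (om, [])"
  define c2 where "c2 = x2 (z0, []) - x2 (om, [])"
  define c where "c = pcomm Q x1 x2 (z0, []) - pcomm Q x1 x2 (om, [])"
  have M1: "\<And>p q. p \<in> {1..a} \<Longrightarrow> q \<in> {1..a} \<Longrightarrow> Mt D1 p q = c1 * (if p = q then 1 else 0) + T1 p q"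
    using Rep_Mt[OF r1] c1_def by blast
  have M2: "\<And>p q. p \<in> {1..a} \<Longrightarrow> q \<in> {1..a} \<Longrightarrow> Mt D2 p q = c2 * (if p = q then 1 else 0) + T2 p q"
    using Rep_Mt[OF r2] c2_def by blast
  have "Mt (dbr D1 D2) p q - (mm a (Mt D2) (Mt D1) p q - mm a (Mt D1) (Mt D2) p q) = c * (if p = q then 1 else 0)"
    if p: "p \<in> {1..a}" and q: "q \<in> {1..a}" for p q
    using Rep_Mt[OF rb p q] mm_shift[OF p q M2 M1] mm_shift[OF p q M1 M2]
    by (simp add: c_def algebra_simps)
  then show ?thesis by blast
qed

end


lemma psub_pzero_eq: "psub X Y = pzero \<Longrightarrow> X = Y"
  by (rule ext) (metis psub_def pzero_def right_minus_eq)

lemma abK: "ab (kronecker a) 0 1 {pzero} a (\<lambda>p. p)"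
proof (unfold_locales)
  show "wfq (kronecker a)" by (simp add: wfq_def kronecker_def)
  show "\<And>x y. x \<in> {pzero} \<Longrightarrow> y \<in> {pzero} \<Longrightarrow> padd x y \<in> {pzero}" by (simp add: padd_def pzero_def)
  show "\<And>x c. x \<in> {pzero} \<Longrightarrow> psmult c x \<in> {pzero}" by (simp add: psmult_def pzero_def)
  show "\<And>x P. x \<in> {pzero} \<Longrightarrow> length (snd P) \<le> 1 \<Longrightarrow> x P = 0" by (simp add: pzero_def)
  show "\<And>x h. x \<in> {pzero} \<Longrightarrow> h \<in> cq (kronecker a) \<Longrightarrow>
     pmult (kronecker a) h x \<in> {pzero} \<and> pmult (kronecker a) x h \<in> {pzero}"
    by (simp add: pmult_pzero_left pmult_pzero_right)
qed (auto simp: kronecker_def)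

lemma K_qpath: assumes "qpath (kronecker a) (v, xs)"
  shows "(xs = [] \<and> v \<in> {0,1}) \<or> (\<exists>r\<in>{1..a}. v = 0 \<and> xs = [r])"
proof (cases xs)
  case Nil then show ?thesis using assms by (auto simp: qpath_def kronecker_def)
next
  case (Cons r ys)
  have "ys = []"
  proof (rule ccontr)
    assume "ys \<noteq> []"
    then have "Suc 0 < length xs" using Cons by simp
    then have "tgt (kronecker a) (xs ! 0) = src (kronecker a) (xs ! Suc 0)" using assms by (simp add: qpath_def)
    then show False by (simp add: kronecker_def)
  qed
  then show ?thesis using assms Cons by (auto simp: qpath_def kronecker_def)
qed

lemma K_idem_comm:
  assumes f: "f \<in> cq (kronecker a)"
  shows "pcomm (kronecker a) (idem 0) f = Lm 0 a (\<lambda>p. p) (\<lambda>p q. if p = q then 1 else 0) f"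
proof -
  interpret K: ab "kronecker a" 0 1 "{pzero}" a "\<lambda>p. p" by (rule abK)
  show ?thesis
  proof (rule ext)
    fix P :: "(nat, nat) path"
    obtain v xs where P: "P = (v, xs)" by (cases P)
    show "pcomm (kronecker a) (idem 0) f P = Lm 0 a (\<lambda>p. p) (\<lambda>p q. if p = q then 1 else 0) f P"
    proof (cases "qpath (kronecker a) (v, xs)")
      case False
      have "Lm 0 a (\<lambda>p. p) (\<lambda>p q. if p = q then 1 else 0) f P = 0"
        using K.asupp_L[of "\<lambda>p q. if p = q then 1 else 0" f] K.qpath_ap False P unfolding K.asupp_def by metis
      then show ?thesis using False P
        by (simp add: pcomm_def psub_def pmult_idem_left pmult_idem_right)
    next
      case True
      show ?thesis
      proof (cases "xs = []")
        case True2: True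
        have "Lm 0 a (\<lambda>p. p) (\<lambda>p q. if p = q then 1 else 0) f P = 0"
          using K.asupp_L[of "\<lambda>p q. if p = q then 1 else 0" f] P True2 unfolding K.asupp_def by auto
        then show ?thesis using True P True2 by (simp add: pcomm_def psub_def pmult_idem_left pmult_idem_right pend_def)
      next
        case False
        then obtain r where r: "r \<in> {1..a}" "v = 0" "xs = [r]" using K_qpath[OF True] by blast
        have "Lm 0 a (\<lambda>p. p) (\<lambda>p q. if p = q then 1 else 0) f P = (\<Sum>p\<in>{1..a}. (if p = r then 1 else 0) * f (0, [p]))"
          using K.L_at[OF r(1)] P r by simp
        also have "\<dots> = (\<Sum>p\<in>{1..a}. if p = r then f (0, [p]) else 0)" by (rule sum.cong) auto
        also have "\<dots> = f P" using r P by simp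
        finally show ?thesis using True P r by (simp add: pcomm_def psub_def pmult_idem_left pmult_idem_right pend_def kronecker_def)
      qed
    qed
  qed
qed

lemma K_der_eq:
  assumes d1: "\<And>f. f \<in> cq (kronecker a) \<Longrightarrow> D1 f = Lm 0 a (\<lambda>p. p) M1 f"
    and d2: "\<And>f. f \<in> cq (kronecker a) \<Longrightarrow> D2 f = Lm 0 a (\<lambda>p. p) M2 f"
    and s: "\<forall>p\<in>{1..a}. \<forall>q\<in>{1..a}. M1 p q - M2 p q = s * (if p = q then 1 else 0)"
  shows "der_eq (kronecker a) {pzero} D1 D2"
proof -
  interpret K: ab "kronecker a" 0 1 "{pzero}" a "\<lambda>p. p" by (rule abK)
  have cm: "pcomm (kronecker a) (idem 0) (idem v) = pzero" for v :: nat
    by (rule ext, simp only: pcomm_def psub_def pmult_idem_left pmult_idem_right, auto simp: idem_def pvec_def pend_def pzero_def)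
  show ?thesis unfolding der_eq_def is_inner_def
  proof (rule bexI[where x="psmult s (idem 0)"], intro conjI ballI)
    show "psmult s (idem 0) \<in> cq (kronecker a)" by (simp add: cq_psmult cq_idem kronecker_def)
    fix v show "pcomm (kronecker a) (psmult s (idem 0)) (idem v) \<in> {pzero}"
      by (simp add: K.pcomm_psmult_left cm) (simp add: psmult_def pzero_def)
  next
    fix f assume f: "f \<in> cq (kronecker a)"
    have "dsub D1 D2 f = Lm 0 a (\<lambda>p. p) (\<lambda>p q. M1 p q - M2 p q) f"
      by (simp add: dsub_def d1 d2 f K.L_Tdiff)
    also have "\<dots> = Lm 0 a (\<lambda>p. p) (\<lambda>p q. s * (if p = q then 1 else 0)) f"
      by (rule K.L_Tcong) (use s in auto)
    also have "\<dots> = pcomm (kronecker a) (psmult s (idem 0)) f"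
      by (simp add: K.L_Tsmult K.pcomm_psmult_left K_idem_comm[OF f])
    finally show "psub (dsub D1 D2 f) (pcomm (kronecker a) (psmult s (idem 0)) f) \<in> {pzero}"
      by (simp add: K.psub_self)
  qed
qed


lemma K_src: "src (kronecker a) x = 0" by (simp add: kronecker_def)
lemma K_tgt: "tgt (kronecker a) x = 1" by (simp add: kronecker_def)

lemma K_der_struct:
  assumes E: "is_der (kronecker a) {pzero} E"
  shows "\<forall>f\<in>cq (kronecker a). E f = Lm 0 a (\<lambda>p. p) (ab.Mt (kronecker a) 0 (\<lambda>p. p) E) f"
proof -
  interpret K: ab "kronecker a" 0 1 "{pzero}" a "\<lambda>p. p" by (rule abK)
  let ?K = "kronecker a"
  let ?N = "K.Mt E"
  let ?L = "Lm 0 a (\<lambda>p. p) ?N"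
  have lin: "E (padd (psmult c f) g) = padd (psmult c (E f)) (E g)" if "f \<in> cq ?K" "g \<in> cq ?K" for f g c
    using K.der_lin[OF E that, of c] by (simp add: psub_pzero_eq)
  have leib: "E (pmult ?K f g) = padd (pmult ?K (E f) g) (pmult ?K f (E g))" if "f \<in> cq ?K" "g \<in> cq ?K" for f g
    using K.der_leib[OF E that] by (simp add: psub_pzero_eq)
  have ezero: "E pzero = pzero" using K.der_pzero[OF E] by simp
  have eidem: "E (idem v) = pzero" if "v \<in> {0,1}" for v
    using K.der_idem[OF E] that by (simp add: kronecker_def)
  have padd0: "padd pzero x = x" "padd x pzero = x" for x :: "(nat,nat) pelem" by (auto simp: padd_def pzero_def)
  have smult: "E (psmult c f) = psmult c (E f)" if "f \<in> cq ?K" for f c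
    using lin[OF that cq_pzero, of c] by (simp add: padd0 ezero)
  have add: "E (padd f g) = padd (E f) (E g)" if "f \<in> cq ?K" "g \<in> cq ?K" for f g
    using lin[OF that, of 1] by (simp add: psmult_def)
  have cqi: "idem v \<in> cq ?K" if "v \<in> {0,1}" for v using that by (auto intro!: cq_idem simp: kronecker_def)
  have earr: "E (arr ?K p) = ?L (arr ?K p)" if p: "p \<in> {1..a}" for p
  proof -
    have ca: "arr ?K p \<in> cq ?K" using K.cq_arr[OF p] by simp
    have ar: "arr ?K p = pvec (0, [p])" by (simp add: arr_def kronecker_def)
    have l: "pmult ?K (idem 0) (arr ?K p) = arr ?K p"
      by (rule ext) (use K.qpath_ap[OF p] in \<open>auto simp: pmult_idem_left ar pvec_def\<close>)
    have r: "pmult ?K (arr ?K p) (idem 1) = arr ?K p"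
      by (rule ext) (use K.qpath_ap[OF p] in \<open>auto simp: pmult_idem_right ar pvec_def pend_def K_tgt\<close>)
    have e1: "E (arr ?K p) = pmult ?K (idem 0) (E (arr ?K p))"
      using leib[OF cqi[of 0] ca] l eidem[of 0] by (simp add: pmult_pzero_left padd0)
    have e2: "E (arr ?K p) = pmult ?K (E (arr ?K p)) (idem 1)"
      using leib[OF ca cqi[of 1]] r eidem[of 1] by (simp add: pmult_pzero_right padd0)
    have as: "K.asupp (E (arr ?K p))" unfolding K.asupp_def
    proof (intro allI impI)
      fix P assume nz: "E (arr ?K p) P \<noteq> 0"
      obtain v xs where P: "P = (v, xs)" by (cases P)
      have "E (arr ?K p) P = (if qpath ?K P \<and> fst P = 0 then (if qpath ?K P \<and> pend ?K P = 1 then E (arr ?K p) P else 0) else 0)"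
        using e1 e2 by (metis pmult_idem_left pmult_idem_right)
      then have q: "qpath ?K P" "fst P = 0" "pend ?K P = 1" using nz by (auto split: if_splits)
      show "\<exists>r\<in>{1..a}. P = (0, [r])"
        using K_qpath[of a v xs] q P by (auto simp: pend_def)
    qed
    show ?thesis
    proof (rule K.asupp_eq[OF as K.asupp_L])
      fix r assume "r \<in> {1..a}"
      then show "E (arr ?K p) (0, [r]) = ?L (arr ?K p) (0, [r])"
        using K.L_arr[OF p] by (simp add: K.Mt_def)
    qed
  qed
  have asup: "\<forall>f. f \<in> cq ?K \<and> K.asupp f \<and> {P. f P \<noteq> 0} \<subseteq> S \<longrightarrow> E f = ?L f" if "finite S" for S
    using that
  proof (induction S rule: finite_induct)
    case empty
    show ?case
    proof (intro allI impI)
      fix f assume "f \<in> cq ?K \<and> K.asupp f \<and> {P. f P \<noteq> 0} \<subseteq> {}"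
      then have "f = pzero" by (auto simp: pzero_def)
      then show "E f = ?L f" by (simp add: ezero K.L_pzero)
    qed
  next
    case (insert P S)
    show ?case
    proof (intro allI impI)
      fix f assume h: "f \<in> cq ?K \<and> K.asupp f \<and> {P. f P \<noteq> 0} \<subseteq> insert P S"
      show "E f = ?L f"
      proof (cases "f P = 0")
        case True
        then have "{P. f P \<noteq> 0} \<subseteq> S" using h by auto
        then show ?thesis using insert.IH h by blast
      next
        case False
        then obtain r where r: "r \<in> {1..a}" "P = (0, [r])" using h unfolding K.asupp_def by blast
        define f' where "f' = (\<lambda>Q. if Q = P then 0 else f Q)"
        have f'cq: "f' \<in> cq ?K"
        proof -
          have "{Q. f' Q \<noteq> 0} \<subseteq> {Q. f Q \<noteq> 0}" by (auto simp: f'_def)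
          moreover have "finite {Q. f Q \<noteq> 0}" using h by (simp add: cq_def)
          ultimately have "finite {Q. f' Q \<noteq> 0}" by (rule finite_subset)
          moreover have "\<forall>Q. f' Q \<noteq> 0 \<longrightarrow> qpath ?K Q" using h unfolding f'_def cq_def by auto
          ultimately show ?thesis by (simp add: cq_def)
        qed
        have f'as: "K.asupp f'" using h unfolding K.asupp_def f'_def by auto
        have f'S: "{Q. f' Q \<noteq> 0} \<subseteq> S" using h by (auto simp: f'_def)
        have IH: "E f' = ?L f'" using insert.IH f'cq f'as f'S by blast
        have dec: "f = padd (psmult (f P) (arr ?K r)) f'"
          by (rule ext) (simp add: f'_def padd_def psmult_def arr_def kronecker_def pvec_def r(2))
        have "E f = padd (psmult (f P) (E (arr ?K r))) (E f')"
          by (subst dec) (rule lin[OF K.cq_arr[OF r(1), simplified] f'cq])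
        also have "\<dots> = padd (psmult (f P) (?L (arr ?K r))) (?L f')" by (simp add: earr[OF r(1)] IH)
        also have "\<dots> = ?L f" by (subst (2) dec) (simp add: K.L_lin)
        finally show ?thesis .
      qed
    qed
  qed
  show ?thesis
  proof
    fix f assume f: "f \<in> cq ?K"
    define h :: "(nat,nat) pelem" where "h = padd (psmult (f (0, [])) (idem 0)) (psmult (f (1, [])) (idem 1))"
    have hcq: "h \<in> cq ?K" unfolding h_def by (intro cq_padd cq_psmult cqi) auto
    define g where "g = psub f h"
    have gcq: "g \<in> cq ?K" unfolding g_def using f hcq by (rule cq_psub)
    have gas: "K.asupp g" unfolding K.asupp_def
    proof (intro allI impI)
      fix P assume nz: "g P \<noteq> 0"
      obtain v xs where P: "P = (v, xs)" by (cases P)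
      have fq: "f P \<noteq> 0 \<Longrightarrow> qpath ?K P" using f unfolding cq_def by blast
      have "g P \<noteq> 0 \<Longrightarrow> xs \<noteq> []"
        using fq K_qpath[of a v "[]"] by (cases "v = 0"; cases "v = 1") (auto simp: g_def h_def P psub_def padd_def psmult_def idem_def pvec_def)
      then have ne: "xs \<noteq> []" using nz by blast
      have "f P \<noteq> 0" using nz ne by (simp add: g_def h_def P psub_def padd_def psmult_def idem_def pvec_def)
      then have "qpath ?K (v, xs)" using f P unfolding cq_def by blast
      then show "\<exists>r\<in>{1..a}. P = (0, [r])" using K_qpath[of a v xs] ne P by auto
    qed
    have Eg: "E g = ?L g" using asup[of "{P. g P \<noteq> 0}"] gcq gas by (simp add: cq_def)
    have fd: "f = padd h g" by (rule ext) (simp add: g_def padd_def psub_def)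
    have Eh: "E h = pzero"
      unfolding h_def using cqi eidem
      by (simp add: add cq_psmult smult) (simp add: padd_def psmult_def pzero_def)
    have Lh: "?L h = pzero" unfolding h_def by (simp add: K.L_padd K.L_psmult K.L_idem) (simp add: padd_def psmult_def pzero_def)
    have "E f = padd (E h) (E g)" by (subst fd) (rule add[OF hcq gcq])
    also have "\<dots> = padd (?L h) (?L g)" by (simp add: Eh Lh Eg)
    also have "\<dots> = ?L (padd h g)" by (simp add: K.L_padd)
    also have "\<dots> = ?L f" using fd by simp
    finally show "E f = ?L f" .
  qed
qed


lemma ideal_gen_empty: "ideal_gen Q {} = {pzero}"
proof
  show "ideal_gen Q {} \<subseteq> {pzero}"
  proof
    fix x assume "x \<in> ideal_gen Q {}"
    then show "x \<in> {pzero}"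
      by induction (auto simp: padd_def psmult_def pzero_def)
  qed
  show "{pzero} \<subseteq> ideal_gen Q {}" by (auto intro: ideal_gen.zero)
qed

lemma ideal_mul:
  assumes w: "wfq Q" and x: "x \<in> ideal_gen Q R" and h: "h \<in> cq Q"
  shows "pmult Q h x \<in> ideal_gen Q R \<and> pmult Q x h \<in> ideal_gen Q R"
  using x
proof induction
  case zero then show ?case by (simp add: pmult_pzero_left pmult_pzero_right ideal_gen.zero)
next
  case (gen r f g)
  have "pmult Q h (pmult Q f (pmult Q r g)) = pmult Q (pmult Q h f) (pmult Q r g)"
    by (simp add: pmult_assoc[OF w])
  moreover have "pmult Q (pmult Q f (pmult Q r g)) h = pmult Q f (pmult Q r (pmult Q g h))"
    by (simp add: pmult_assoc[OF w])
  ultimately show ?case using gen h by (auto intro!: ideal_gen.gen cq_pmult)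
next
  case (add x y) then show ?case by (simp add: pmult_padd_left pmult_padd_right ideal_gen.add)
next
  case (smult x c) then show ?case by (simp add: pmult_psmult_left pmult_psmult_right ideal_gen.smult)
qed

lemma adm_low: "admissible Q I \<Longrightarrow> x \<in> I \<Longrightarrow> length (snd P) \<le> 1 \<Longrightarrow> x P = 0"
proof -
  assume "admissible Q I" "x \<in> I" "length (snd P) \<le> 1"
  then have "x \<in> Rk Q 2" unfolding admissible_def by blast
  then have "x P \<noteq> 0 \<longrightarrow> 2 \<le> length (snd P)" unfolding Rk_def by blast
  then show "x P = 0" using \<open>length (snd P) \<le> 1\<close> by linarith
qed

lemma abQ:
  assumes t: "is_toupie_algebra Q z0 om I"
    and b: "bij_betw \<alpha> {1..a} {g \<in> arrs Q. src Q g = z0 \<and> tgt Q g = om}"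
  shows "ab Q z0 om I a \<alpha>"
proof -
  have tp: "is_toupie Q z0 om" and adm: "admissible Q I" using t by (auto simp: is_toupie_algebra_def)
  obtain R where R: "I = ideal_gen Q R" using t by (auto simp: is_toupie_algebra_def)
  have w: "wfq Q" using tp by (simp add: is_toupie_def wfq_def)
  show ?thesis
  proof
    show "wfq Q" by (rule w)
    show "\<And>p. p \<in> {1..a} \<Longrightarrow> \<alpha> p \<in> arrs Q \<and> src Q (\<alpha> p) = z0 \<and> tgt Q (\<alpha> p) = om"
      using b by (auto simp: bij_betw_def)
    show "inj_on \<alpha> {1..a}" using b by (simp add: bij_betw_def)
    show "\<And>g. g \<in> arrs Q \<Longrightarrow> tgt Q g \<noteq> z0" using tp unfolding is_toupie_def by blast
    show "\<And>g. g \<in> arrs Q \<Longrightarrow> src Q g \<noteq> om" using tp unfolding is_toupie_def by blast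
    show "z0 \<in> verts Q" using tp by (simp add: is_toupie_def)
    show "pzero \<in> I" using R by (simp add: ideal_gen.zero)
    show "\<And>x y. x \<in> I \<Longrightarrow> y \<in> I \<Longrightarrow> padd x y \<in> I" using R by (simp add: ideal_gen.add)
    show "\<And>x c. x \<in> I \<Longrightarrow> psmult c x \<in> I" using R by (simp add: ideal_gen.smult)
    show "\<And>x P. x \<in> I \<Longrightarrow> length (snd P) \<le> 1 \<Longrightarrow> x P = 0"
      using adm_low[OF adm] by blast
    show "\<And>x h. x \<in> I \<Longrightarrow> h \<in> cq Q \<Longrightarrow> pmult Q h x \<in> I \<and> pmult Q x h \<in> I"
      using ideal_mul[OF w] R by blast
  qed
qed


theorem proposition6p3:
  fixes Q :: "('v, 'e) quiver" and z0 om :: 'v and I :: "('v, 'e) pelem set"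
    and a :: nat and \<alpha> :: "nat \<Rightarrow> 'e"
  assumes "is_toupie_algebra Q z0 om I"
    and "bij_betw \<alpha> {1..a} {g \<in> arrs Q. src Q g = z0 \<and> tgt Q g = om}"
  shows "lie_iso_HH1 Q I
           (lie_gen Q I ({w_der Q \<alpha> p q | p q. p \<noteq> q \<and> p \<in> {1..a} \<and> q \<in> {1..a}}
                         \<union> {x_der Q \<alpha> j | j. 2 \<le> j \<and> j \<le> a}))
           (kronecker a) (ideal_gen (kronecker a) {})"
proof -
  interpret Qa: ab Q z0 om I a \<alpha> by (rule abQ[OF assms])
  interpret K: ab "kronecker a" 0 1 "{pzero}" a "\<lambda>p. p" by (rule abK)
  let ?S = "lie_gen Q I Qa.Gs"
  let ?L = "Lm (0::nat) a (\<lambda>p. p)"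
  define \<phi> :: "('v,'e) dmap \<Rightarrow> (nat,nat) dmap" where "\<phi> D = ?L (Qa.Mt D)" for D
  have Sdef: "lie_gen Q I ({w_der Q \<alpha> p q | p q. p \<noteq> q \<and> p \<in> {1..a} \<and> q \<in> {1..a}}
                         \<union> {x_der Q \<alpha> j | j. 2 \<le> j \<and> j \<le> a}) = ?S"
    by (simp add: Qa.Gs_def)
  have c1: "\<forall>D\<in>?S. is_der (kronecker a) {pzero} (\<phi> D)"
    by (simp add: \<phi>_def K.is_der_L)
  have c2: "\<forall>D1\<in>?S. \<forall>D2\<in>?S. der_eq Q I D1 D2 \<longleftrightarrow> der_eq (kronecker a) {pzero} (\<phi> D1) (\<phi> D2)"
  proof (intro ballI iffI)
    fix D1 D2 assume "D1 \<in> ?S" "D2 \<in> ?S" "der_eq Q I D1 D2"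
    then obtain s where s: "\<forall>p\<in>{1..a}. \<forall>q\<in>{1..a}. Qa.Mt D1 p q - Qa.Mt D2 p q = s * (if p = q then 1 else 0)"
      using Qa.inner_Mt by blast
    show "der_eq (kronecker a) {pzero} (\<phi> D1) (\<phi> D2)"
      by (rule K_der_eq[OF _ _ s]) (simp_all add: \<phi>_def)
  next
    fix D1 D2 assume d: "D1 \<in> ?S" "D2 \<in> ?S" and e: "der_eq (kronecker a) {pzero} (\<phi> D1) (\<phi> D2)"
    obtain s where s: "\<forall>p\<in>{1..a}. \<forall>q\<in>{1..a}. K.Mt (\<phi> D1) p q - K.Mt (\<phi> D2) p q = s * (if p = q then 1 else 0)"
      using K.inner_Mt[OF e] by blast
    then have "\<forall>p\<in>{1..a}. \<forall>q\<in>{1..a}. Qa.Mt D1 p q - Qa.Mt D2 p q = s * (if p = q then 1 else 0)"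
      by (simp add: \<phi>_def K.Mt_L)
    then show "der_eq Q I D1 D2" using Qa.Mt_der_eq Qa.Inv_S d by blast
  qed
  have c3: "\<forall>E. is_der (kronecker a) {pzero} E \<longrightarrow> (\<exists>D\<in>?S. der_eq (kronecker a) {pzero} (\<phi> D) E)"
  proof (intro allI impI)
    fix E assume E: "is_der (kronecker a) {pzero} E"
    define N where "N = K.Mt E"
    define t where "t = trc a N / of_nat a"
    define T where "T = (\<lambda>p q. N p q - t * (if p = q then 1 else 0))"
    have tr: "trc a T = 0"
    proof (cases "a = 0")
      case True then show ?thesis by (simp add: trc_def)
    next
      case False
      have "trc a T = trc a N - of_nat a * t" by (simp add: T_def trc_def sum_subtractf)
      then show ?thesis using False by (simp add: t_def)
    qed
    obtain D where D: "D \<in> ?S" "\<forall>p\<in>{1..a}. \<forall>q\<in>{1..a}. Qa.Mt D p q = T p q"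
      using Qa.ach_traceless[OF tr] unfolding Qa.ach_def by blast
    have "der_eq (kronecker a) {pzero} (\<phi> D) E"
    proof (rule K_der_eq)
      show "\<And>f. f \<in> cq (kronecker a) \<Longrightarrow> \<phi> D f = ?L (Qa.Mt D) f" by (simp add: \<phi>_def)
      show "\<And>f. f \<in> cq (kronecker a) \<Longrightarrow> E f = ?L N f" using K_der_struct[OF E] by (simp add: N_def)
      show "\<forall>p\<in>{1..a}. \<forall>q\<in>{1..a}. Qa.Mt D p q - N p q = (- t) * (if p = q then 1 else 0)"
        using D(2) by (simp add: T_def)
    qed
    then show "\<exists>D\<in>?S. der_eq (kronecker a) {pzero} (\<phi> D) E" using D(1) by blast
  qed
  have c4: "\<forall>D1\<in>?S. \<forall>D2\<in>?S. \<forall>c. der_eq (kronecker a) {pzero} (\<phi> (dadd (dsmult c D1) D2)) (dadd (dsmult c (\<phi> D1)) (\<phi> D2))"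
  proof (intro ballI allI)
    fix D1 D2 c
    have "Qa.Mt (dadd (dsmult c D1) D2) = (\<lambda>p q. c * Qa.Mt D1 p q + Qa.Mt D2 p q)"
      by (intro ext) (simp add: Qa.Mt_dadd Qa.Mt_dsmult)
    then show "der_eq (kronecker a) {pzero} (\<phi> (dadd (dsmult c D1) D2)) (dadd (dsmult c (\<phi> D1)) (\<phi> D2))"
      by (intro K.der_eq_same) (simp add: \<phi>_def K.L_Tlin dadd_def dsmult_def)
  qed
  have c5: "\<forall>D1\<in>?S. \<forall>D2\<in>?S. der_eq (kronecker a) {pzero} (\<phi> (dbr D1 D2)) (dbr (\<phi> D1) (\<phi> D2))"
  proof (intro ballI)
    fix D1 D2 assume d: "D1 \<in> ?S" "D2 \<in> ?S"
    obtain s where s: "\<forall>p\<in>{1..a}. \<forall>q\<in>{1..a}.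
       Qa.Mt (dbr D1 D2) p q - (mm a (Qa.Mt D2) (Qa.Mt D1) p q - mm a (Qa.Mt D1) (Qa.Mt D2) p q) = s * (if p = q then 1 else 0)"
      using Qa.br_Mt[OF Qa.Inv_S[OF d(1)] Qa.Inv_S[OF d(2)]] by blast
    show "der_eq (kronecker a) {pzero} (\<phi> (dbr D1 D2)) (dbr (\<phi> D1) (\<phi> D2))"
    proof (rule K_der_eq[OF _ _ s])
      show "\<And>f. f \<in> cq (kronecker a) \<Longrightarrow> \<phi> (dbr D1 D2) f = ?L (Qa.Mt (dbr D1 D2)) f" by (simp add: \<phi>_def)
      show "\<And>f. f \<in> cq (kronecker a) \<Longrightarrow> dbr (\<phi> D1) (\<phi> D2) f =
           ?L (\<lambda>p q. mm a (Qa.Mt D2) (Qa.Mt D1) p q - mm a (Qa.Mt D1) (Qa.Mt D2) p q) f"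
        by (simp add: \<phi>_def dbr_def K.L_comp K.L_Tdiff)
    qed
  qed
  show ?thesis unfolding Sdef ideal_gen_empty lie_iso_HH1_def
    using c1 c2 c3 c4 c5 by blast
qed

end
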